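(* Assume the standard setting described in the context. Define the random processes $\mathbf g_1(\theta):=\nabla J_{\mathbf M}(\theta)$ and \[ \mathbf g_2(\theta):=\Bigl(\bigl(\partial^2_{\beta_j}\hat{\mathbf J}(\theta)\bigr)_{j\in V_1},\ \bigl(\partial_{\beta_j}\partial_{w_{ij}}\hat{\mathbf J}(\theta)\bigr)_{j\in V_1,i\in V_0},\ \bigl(\partial_{w_{ij}}\partial_{w_{kj}}\hat{\mathbf J}(\theta)\bigr)_{j\in V_1,\ i,k\in V_0,\ i\le k}\Bigr), \] where $\hat{\mathbf J}(\theta):=\int\Psi_\theta(x)f_{\mathbf M}(x)\,\mathbb{P}_X(dx)$ and $\le$ is a fixed total order on $V_0$. Then for every $\theta\in\mathcal{E}_P^{(0,0,1,2)}(\mathcal{X})$ the Gaussian random vector $(\mathbf g_1(\theta),\mathbf g_2(\theta))$ is non-degenerate, i.e. its covariance matrix has full rank.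
   Context: Shallow network: finite pairwise disjoint sets $V_0,V_1,V_2$, activation $\psi$; $E=(V_0\times V_1)\cup(V_1\times V_2)$; $\Theta=\mathbb{R}^E\times\mathbb{R}^{V_1\cup V_2}$, $\theta=(w,\beta)$; response $(\Psi_\theta(x))_l=\beta_l+\sum_{j\in V_1}\psi(\beta_j+\sum_{i\in V_0}x_iw_{ij})w_{jl}$; $w_{j\bullet}=(w_{jl})_{l\in V_2}$. Standard setting: $\#V_2=1$, $\psi$ real-analytic; $\mathbb{P}_X$ a distribution on $\mathbb{R}^{V_0}$ with compact support $\mathcal{X}$; measurable space $\mathbb{M}$, kernel $K$ from $\mathbb{M}\times\mathbb{R}^{V_0}$ to $\mathbb{R}^{V_2}$; for $\mathbf m\in\mathbb{M}$, under $\mathbb{P}_{\mathbf m}$: $X\sim\mathbb{P}_X$, $\mathbb{P}_{\mathbf m}(Y\in B\mid X)=K(\mathbf m,X;B)$, $\mathbb{E}_{\mathbf m}[\|Y\|^2]<\infty$; target $f_{\mathbf m}(x)=\int y\,K(\mathbf m,x;dy)$; $R:\Theta\to\mathbb{R}$ real-analytic convex; $\mathbf M$ an $\mathbb{M}$-valued random variable such that for every continuous $\phi$, $\int\phi f_{\mathbf M}\,d\mathbb{P}_X$ is Gaussian with strictly positive variance whenever $\phi\not\equiv0$ on $\mathcal{X}$. Cost $J_{\mathbf m}(\theta)=\mathbb{E}_{\mathbf m}[(\Psi_\theta(X)-Y)^2]+R(\theta)$. Polynomial efficiency: for $m=(m_\emptyset,m_0,\dots,m_n)\in\mathbb{N}_0^{n+2}$,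 $\theta$ is $m$-polynomially efficient on $\mathcal{X}$ if $w_{k\bullet}\not\equiv0$ for all $k\in V_1$, $\psi$ is $n$ times differentiable, and the only polynomials $P^{(\emptyset)}$ of degree $\le m_\emptyset$ and $P_j^{(k)}$ ($j\in V_1$, $0\le k\le n$) of degree $\le m_k$ with $P^{(\emptyset)}(x)+\sum_{j\in V_1}\sum_{k=0}^nP^{(k)}_j(x)\psi^{(k)}(\beta_j+\sum_{i}x_iw_{ij})=0$ for all $x\in\mathcal{X}$ are zero. $\mathcal{E}^m_P(\mathcal{X})$ is the set of these parameters. *)

theory Defs
  imports "HOL-Analysis.Analysis" "HOL-Probability.Probability"
begin

text \<open>V0 is represented by a finite (linearly ordered) type 'i, V1 by a finite type 'j,
  V2 is a singleton. A parameter theta = (w, beta) is represented as a tuple (W, v, b, c) with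
  W $ i $ j = w_ij (i in V0, j in V1), v $ j = w_jl (l the output neuron),
  b $ j = beta_j (j in V1), c = beta_l.\<close>

type_synonym ('i, 'j) param = "((real ^ 'j) ^ 'i) \<times> (real ^ 'j) \<times> (real ^ 'j) \<times> real"

definition pW :: "('i::finite, 'j::finite) param \<Rightarrow> (real ^ 'j) ^ 'i" where "pW \<theta> = fst \<theta>"
definition pv :: "('i::finite, 'j::finite) param \<Rightarrow> real ^ 'j" where "pv \<theta> = fst (snd \<theta>)"
definition pb :: "('i::finite, 'j::finite) param \<Rightarrow> real ^ 'j" where "pb \<theta> = fst (snd (snd \<theta>))"
definition pc :: "('i::finite, 'j::finite) param \<Rightarrow> real" where "pc \<theta> = snd (snd (snd \<theta>))"

definition preact :: "('i::finite, 'j::finite) param \<Rightarrow> real ^ 'i \<Rightarrow> 'j \<Rightarrow> real" where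
  "preact \<theta> x j = pb \<theta> $ j + (\<Sum>i\<in>UNIV. x $ i * pW \<theta> $ i $ j)"

definition resp :: "(real \<Rightarrow> real) \<Rightarrow> ('i::finite, 'j::finite) param \<Rightarrow> real ^ 'i \<Rightarrow> real" where
  "resp \<psi> \<theta> x = pc \<theta> + (\<Sum>j\<in>UNIV. \<psi> (preact \<theta> x j) * pv \<theta> $ j)"

definition multi_indices :: "('a::euclidean_space \<Rightarrow> nat) set" where
  "multi_indices = {\<alpha>. \<forall>b. b \<notin> Basis \<longrightarrow> \<alpha> b = 0}"

text \<open>f is real-analytic on S: near every point of S it is the sum of an (unconditionally,
  i.e. absolutely) convergent power series in the coordinates.\<close>
definition real_analytic_on :: "('a::euclidean_space \<Rightarrow> real) \<Rightarrow> 'a set \<Rightarrow> bool" where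
  "real_analytic_on f S \<longleftrightarrow>
     (\<forall>x0\<in>S. \<exists>r>0. \<exists>c :: ('a \<Rightarrow> nat) \<Rightarrow> real. \<forall>x\<in>ball x0 r.
        ((\<lambda>\<alpha>. c \<alpha> * (\<Prod>b\<in>Basis. ((x - x0) \<bullet> b) ^ \<alpha> b)) has_sum f x) multi_indices)"

definition mono_idx :: "nat \<Rightarrow> ('i::finite \<Rightarrow> nat) set" where
  "mono_idx d = {\<alpha>. sum \<alpha> UNIV \<le> d}"

definition mpoly_eval :: "nat \<Rightarrow> (('i::finite \<Rightarrow> nat) \<Rightarrow> real) \<Rightarrow> real ^ 'i \<Rightarrow> real" where
  "mpoly_eval d a x = (\<Sum>\<alpha>\<in>mono_idx d. a \<alpha> * (\<Prod>i\<in>UNIV. (x $ i) ^ \<alpha> i))"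

text \<open>theta is m-polynomially efficient on X, where m = (m0, ms!0, ..., ms!n), n = length ms - 1.\<close>
definition poly_efficient ::
  "(real \<Rightarrow> real) \<Rightarrow> (real ^ 'i) set \<Rightarrow> nat \<Rightarrow> nat list \<Rightarrow> ('i::finite, 'j::finite) param \<Rightarrow> bool" where
  "poly_efficient \<psi> X m0 ms \<theta> \<longleftrightarrow>
     ms \<noteq> [] \<and>
     (\<forall>k. pv \<theta> $ k \<noteq> 0) \<and>
     (\<forall>k < length ms - 1. \<forall>t. (deriv ^^ k) \<psi> differentiable (at t)) \<and>
     (\<forall>(a0 :: ('i \<Rightarrow> nat) \<Rightarrow> real) (A :: 'j \<Rightarrow> nat \<Rightarrow> ('i \<Rightarrow> nat) \<Rightarrow> real).
        (\<forall>x\<in>X. mpoly_eval m0 a0 x +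
                (\<Sum>j\<in>UNIV. \<Sum>k<length ms. mpoly_eval (ms ! k) (A j k) x * (deriv ^^ k) \<psi> (preact \<theta> x j)) = 0)
        \<longrightarrow> (\<forall>\<alpha>\<in>mono_idx m0. a0 \<alpha> = 0) \<and>
            (\<forall>j k. k < length ms \<longrightarrow> (\<forall>\<alpha>\<in>mono_idx (ms ! k). A j k \<alpha> = 0)))"

definition msupport :: "'a::topological_space measure \<Rightarrow> 'a set" where
  "msupport \<mu> = {x. \<forall>U. open U \<longrightarrow> x \<in> U \<longrightarrow> emeasure \<mu> U > 0}"

definition target :: "('m \<times> (real ^ 'i::finite) \<Rightarrow> real measure) \<Rightarrow> 'm \<Rightarrow> real ^ 'i \<Rightarrow> real" where
  "target K m x = (\<integral>y. y \<partial>K (m, x))"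

definition Jcost :: "(real \<Rightarrow> real) \<Rightarrow> (real ^ 'i::finite) measure \<Rightarrow> ('m \<times> (real ^ 'i) \<Rightarrow> real measure)
     \<Rightarrow> (('i, 'j::finite) param \<Rightarrow> real) \<Rightarrow> 'm \<Rightarrow> ('i, 'j) param \<Rightarrow> real" where
  "Jcost \<psi> PX K R m \<theta> = (\<integral>x. (\<integral>y. (resp \<psi> \<theta> x - y)\<^sup>2 \<partial>K (m, x)) \<partial>PX) + R \<theta>"

definition Jhat :: "(real \<Rightarrow> real) \<Rightarrow> (real ^ 'i::finite) measure \<Rightarrow> ('m \<times> (real ^ 'i) \<Rightarrow> real measure)
     \<Rightarrow> 'm \<Rightarrow> ('i, 'j::finite) param \<Rightarrow> real" where
  "Jhat \<psi> PX K m \<theta> = (\<integral>x. resp \<psi> \<theta> x * target K m x \<partial>PX)"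

definition gradient :: "('a::real_inner \<Rightarrow> real) \<Rightarrow> 'a \<Rightarrow> 'a" where
  "gradient f x = (THE D. GDERIV f x :> D)"

definition pdiff :: "('a::real_normed_vector \<Rightarrow> real) \<Rightarrow> 'a \<Rightarrow> 'a \<Rightarrow> real" where
  "pdiff f e x = deriv (\<lambda>t. f (x + t *\<^sub>R e)) 0"

definition dir_b :: "'j \<Rightarrow> ('i::finite, 'j::finite) param" where
  "dir_b j = (0, 0, axis j 1, 0)"
definition dir_w :: "'i \<Rightarrow> 'j \<Rightarrow> ('i::finite, 'j::finite) param" where
  "dir_w i j = (axis i (axis j 1), 0, 0, 0)"

datatype ('p, 'i, 'j) gidx = G1 'p | Gbb 'j | Gbw 'j 'i | Gww 'j 'i 'i

definition gindex :: "(('i::{finite,linorder}, 'j::finite) param, 'i, 'j) gidx set" where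
  "gindex = G1 ` Basis \<union> range Gbb \<union> {Gbw j i | j i. True} \<union> {Gww j i k | j i k. i \<le> k}"

definition gvec :: "(real \<Rightarrow> real) \<Rightarrow> (real ^ 'i::{finite,linorder}) measure \<Rightarrow> ('m \<times> (real ^ 'i::{finite,linorder}) \<Rightarrow> real measure)
     \<Rightarrow> (('i::{finite,linorder}, 'j::finite) param \<Rightarrow> real) \<Rightarrow> 'm \<Rightarrow> ('i::{finite,linorder}, 'j::finite) param
     \<Rightarrow> (('i::{finite,linorder}, 'j::finite) param, 'i::{finite,linorder}, 'j::finite) gidx \<Rightarrow> real" where
  "gvec \<psi> PX K R m \<theta> idx =
     (case idx of
        G1 e \<Rightarrow> gradient (Jcost \<psi> PX K R m) \<theta> \<bullet> e
      | Gbb j \<Rightarrow> pdiff (pdiff (Jhat \<psi> PX K m) (dir_b j)) (dir_b j) \<theta>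
      | Gbw j i \<Rightarrow> pdiff (pdiff (Jhat \<psi> PX K m) (dir_w i j)) (dir_b j) \<theta>
      | Gww j i k \<Rightarrow> pdiff (pdiff (Jhat \<psi> PX K m) (dir_w k j)) (dir_w i j) \<theta>)"

definition cov_matrix :: "'w measure \<Rightarrow> ('w \<Rightarrow> 'k \<Rightarrow> real) \<Rightarrow> 'k \<Rightarrow> 'k \<Rightarrow> real" where
  "cov_matrix P Z a b =
     (\<integral>\<omega>. (Z \<omega> a - (\<integral>\<omega>'. Z \<omega>' a \<partial>P)) * (Z \<omega> b - (\<integral>\<omega>'. Z \<omega>' b \<partial>P)) \<partial>P)"

definition full_rank_on :: "'k set \<Rightarrow> ('k \<Rightarrow> 'k \<Rightarrow> real) \<Rightarrow> bool" where
  "full_rank_on I C \<longleftrightarrow> (\<forall>c. (\<forall>a\<in>I. (\<Sum>b\<in>I. C a b * c b) = 0) \<longrightarrow> (\<forall>b\<in>I. c b = 0))"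

end

theory Submission
  imports Defs
begin


definition delta1 :: "'a \<Rightarrow> ('a \<Rightarrow> nat)" where "delta1 b = (\<lambda>b'. if b' = b then 1 else 0)"

lemma mi_small:
  fixes \<alpha> :: "'a::euclidean_space \<Rightarrow> nat"
  assumes "\<alpha> \<in> multi_indices" "(\<Sum>b\<in>Basis. \<alpha> b) \<le> 1"
  shows "\<alpha> = (\<lambda>_. 0) \<or> (\<exists>b\<in>Basis. \<alpha> = delta1 b)"
proof (cases "\<forall>b\<in>Basis. \<alpha> b = 0")
  case True
  then show ?thesis using assms(1) by (auto simp: multi_indices_def fun_eq_iff)
next
  case False
  then obtain b where b: "b \<in> Basis" "\<alpha> b \<noteq> 0" by auto
  have "\<alpha> b + (\<Sum>b'\<in>Basis-{b}. \<alpha> b') \<le> 1"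
    using assms(2) b(1) by (simp add: sum.remove)
  then have 1: "\<alpha> b = 1" and 0: "sum \<alpha> (Basis-{b}) = 0" using b(2) by arith+
  from 0 have 2: "\<forall>b'\<in>Basis-{b}. \<alpha> b' = 0" by simp
  have "\<alpha> = delta1 b"
    using 1 2 assms(1) by (auto simp: multi_indices_def fun_eq_iff delta1_def)
  then show ?thesis using b by auto
qed

lemma analytic_differentiable:
  fixes R :: "'a::euclidean_space \<Rightarrow> real"
  assumes "real_analytic_on R UNIV"
  shows "\<exists>D. (R has_derivative D) (at x0)"
proof -
  obtain r c where r: "r > 0" and hs: "\<And>x. x \<in> ball x0 r \<Longrightarrow>
      ((\<lambda>\<alpha>. c \<alpha> * (\<Prod>b\<in>Basis. ((x - x0) \<bullet> b) ^ \<alpha> b)) has_sum R x) multi_indices"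
    using assms unfolding real_analytic_on_def by blast
  define d where "d = real DIM('a)"
  have d1: "d \<ge> 1" unfolding d_def using DIM_positive by (simp add: Suc_le_eq)
  define s where "s = r / (2 * d)"
  have s0: "s > 0" using r d1 by (simp add: s_def)
  define p where "p = x0 + (\<Sum>b\<in>Basis. s *\<^sub>R b)"
  have "norm (\<Sum>b\<in>Basis. s *\<^sub>R (b::'a)) \<le> (\<Sum>b\<in>(Basis::'a set). norm (s *\<^sub>R b))"
    by (rule norm_sum)
  also have "\<dots> = d * s" using s0 by (simp add: d_def)
  also have "\<dots> < r" using r d1 by (simp add: s_def)
  finally have "p \<in> ball x0 r" by (simp add: p_def dist_norm)
  have pb: "(p - x0) \<bullet> b = s" if "b \<in> Basis" for b
    using that by (simp add: p_def inner_sum_left inner_Basis if_distrib cong: if_cong)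
  define tot where "tot \<alpha> = (\<Sum>b\<in>(Basis::'a set). \<alpha> b)" for \<alpha> :: "'a \<Rightarrow> nat"
  have "((\<lambda>\<alpha>. c \<alpha> * s ^ tot \<alpha>) has_sum R p) multi_indices"
  proof -
    have "((\<lambda>\<alpha>. c \<alpha> * (\<Prod>b\<in>Basis. ((p - x0) \<bullet> b) ^ \<alpha> b)) has_sum R p) multi_indices"
      using hs \<open>p \<in> ball x0 r\<close> by blast
    moreover have "(\<Prod>b\<in>Basis. ((p - x0) \<bullet> b) ^ \<alpha> b) = s ^ tot \<alpha>" for \<alpha>
      by (simp add: pb tot_def power_sum)
    ultimately show ?thesis by simp
  qed
  then have sm1: "(\<lambda>\<alpha>. c \<alpha> * s ^ tot \<alpha>) summable_on multi_indices" by (auto simp: summable_on_def)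
  have "(\<lambda>\<alpha>. \<bar>c \<alpha> * s ^ tot \<alpha>\<bar>) summable_on multi_indices"
    using summable_on_iff_abs_summable_on_real[THEN iffD1, OF sm1] by simp
  then have abs_sum: "(\<lambda>\<alpha>. \<bar>c \<alpha>\<bar> * s ^ tot \<alpha>) summable_on multi_indices"
    using s0 by (simp add: abs_mult)
  define Mt where "Mt = infsum (\<lambda>\<alpha>. \<bar>c \<alpha>\<bar> * s ^ tot \<alpha>) multi_indices"
  have Mt0: "Mt \<ge> 0" unfolding Mt_def using s0 by (intro infsum_nonneg) auto
  define F where "F = insert (\<lambda>_. 0) (delta1 ` (Basis::'a set))"
  have finF: "finite F" by (simp add: F_def)
  have FA: "F \<subseteq> multi_indices" by (auto simp: F_def multi_indices_def delta1_def)
  have d_inj: "inj_on delta1 (Basis::'a set)"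
    by (auto simp: inj_on_def delta1_def fun_eq_iff)
  have d_ne0: "delta1 b \<noteq> (\<lambda>_. 0)" for b :: 'a by (auto simp: delta1_def fun_eq_iff)
  have d_nin: "(\<lambda>_. 0::nat) \<notin> delta1 ` (Basis::'a set)"
    using d_ne0 by (metis (no_types, lifting) imageE)
  define L where "L h = (\<Sum>b\<in>Basis. c (delta1 b) * (h \<bullet> b))" for h :: 'a
  have linL: "bounded_linear L"
    unfolding L_def by (intro bounded_linear_intros)
  define t where "t = (\<lambda>(h::'a) \<alpha>. c \<alpha> * (\<Prod>b\<in>Basis. (h \<bullet> b) ^ \<alpha> b))"
  have sumF: "sum (t h) F = c (\<lambda>_. 0) + L h" for h
  proof -
    have "sum (t h) F = t h (\<lambda>_. 0) + sum (t h) (delta1 ` Basis)"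
      unfolding F_def using d_nin by (subst sum.insert) auto
    also have "sum (t h) (delta1 ` Basis) = (\<Sum>b\<in>Basis. t h (delta1 b))"
      using d_inj by (simp add: sum.reindex)
    also have "\<dots> = L h"
    proof -
      have "t h (delta1 b) = c (delta1 b) * (h \<bullet> b)" if "b \<in> Basis" for b
      proof -
        have "(\<Prod>b'\<in>Basis. (h \<bullet> b') ^ delta1 b b') = (\<Prod>b'\<in>Basis. if b' = b then h \<bullet> b else 1)"
          by (intro prod.cong) (auto simp: delta1_def)
        also have "\<dots> = h \<bullet> b" using that by (simp add: prod.delta)
        finally show ?thesis by (simp add: t_def)
      qed
      then show ?thesis by (simp add: L_def)
    qed
    finally show ?thesis by (simp add: t_def)
  qed
  have R0: "R x0 = c (\<lambda>_. 0)"
  proof -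
    have h0: "(t 0 has_sum R x0) multi_indices" using hs[of x0] r by (simp add: t_def)
    have "t 0 \<alpha> = 0" if "\<alpha> \<in> multi_indices - F" for \<alpha>
    proof -
      from that have "\<alpha> \<noteq> (\<lambda>_. 0)" by (auto simp: F_def)
      then obtain b where "\<alpha> b \<noteq> 0" by auto
      moreover have "b \<in> Basis" using that \<open>\<alpha> b \<noteq> 0\<close> by (auto simp: multi_indices_def)
      ultimately show ?thesis by (auto simp: t_def intro!: prod_zero)
    qed
    then have "(t 0 has_sum sum (t 0) F) multi_indices"
      using finF FA by (intro has_sum_finite_neutralI) auto
    with h0 have "R x0 = sum (t 0) F" using has_sum_unique by blast
    then show ?thesis using sumF[of 0] by (simp add: L_def)
  qed
  show ?thesis
  proof (rule exI[of _ L], unfold has_derivative_at_alt, intro conjI allI impI linL)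
    fix e :: real assume e: "e > 0"
    define \<delta> where "\<delta> = min s (e * s\<^sup>2 / (Mt + 1))"
    have \<delta>0: "\<delta> > 0" using e s0 Mt0 by (simp add: \<delta>_def)
    show "\<exists>d>0. \<forall>y. norm (y - x0) < d \<longrightarrow> norm (R y - R x0 - L (y - x0)) \<le> e * norm (y - x0)"
    proof (intro exI[of _ \<delta>] conjI allI impI \<delta>0)
      fix y assume y: "norm (y - x0) < \<delta>"
      define h where "h = y - x0"
      have hs_le: "norm h \<le> s" using y by (simp add: h_def \<delta>_def)
      have "y \<in> ball x0 r"
      proof -
        have "s < r" using r d1 by (simp add: s_def field_simps)
        then show ?thesis using hs_le by (simp add: dist_norm h_def norm_minus_commute)
      qed
      then have hy: "(t h has_sum R y) multi_indices" using hs by (simp add: t_def h_def)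
      have hD: "(t h has_sum (R y - (c (\<lambda>_. 0) + L h))) (multi_indices - F)"
        using has_sum_Diff[OF hy has_sum_finite[OF finF] FA] sumF by simp
      define g where "g \<alpha> = \<bar>c \<alpha>\<bar> * s ^ tot \<alpha> * (norm h / s)\<^sup>2" for \<alpha>
      have gs: "g summable_on (multi_indices - F)"
        unfolding g_def
        by (intro summable_on_cmult_left summable_on_subset[OF abs_sum]) auto
      have bound: "\<bar>t h \<alpha>\<bar> \<le> g \<alpha>" if "\<alpha> \<in> multi_indices - F" for \<alpha>
      proof -
        have tot2: "tot \<alpha> \<ge> 2"
        proof (rule ccontr)
          assume "\<not> tot \<alpha> \<ge> 2"
          then have "tot \<alpha> \<le> 1" by simp
          then have "\<alpha> = (\<lambda>_. 0) \<or> (\<exists>b\<in>Basis. \<alpha> = delta1 b)"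
            using that mi_small[of \<alpha>] by (simp add: tot_def)
          then show False using that by (auto simp: F_def)
        qed
        have "\<bar>\<Prod>b\<in>Basis. (h \<bullet> b) ^ \<alpha> b\<bar> = (\<Prod>b\<in>Basis. \<bar>h \<bullet> b\<bar> ^ \<alpha> b)"
          by (simp add: abs_prod power_abs)
        also have "\<dots> \<le> (\<Prod>b\<in>(Basis::'a set). norm h ^ \<alpha> b)"
          by (intro prod_mono conjI power_mono) (auto simp: Basis_le_norm)
        also have "\<dots> = norm h ^ tot \<alpha>" by (simp add: tot_def power_sum)
        also have "\<dots> = s ^ tot \<alpha> * (norm h / s) ^ tot \<alpha>"
          using s0 by (simp add: power_divide)
        also have "\<dots> \<le> s ^ tot \<alpha> * (norm h / s)\<^sup>2"
        proof -
          have "(norm h / s) ^ tot \<alpha> \<le> (norm h / s) ^ 2"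
            using tot2 hs_le s0 by (intro power_decreasing) auto
          then show ?thesis using s0 by (intro mult_left_mono) auto
        qed
        finally show ?thesis unfolding t_def g_def
          by (simp add: abs_mult mult.assoc mult_left_mono)
      qed
      have le1: "\<bar>R y - (c (\<lambda>_. 0) + L h)\<bar> \<le> infsum g (multi_indices - F)"
      proof -
        have a: "R y - (c (\<lambda>_. 0) + L h) \<le> infsum g (multi_indices - F)"
          using has_sum_mono[OF hD has_sum_infsum[OF gs]] bound by force
        have "((\<lambda>\<alpha>. - t h \<alpha>) has_sum - (R y - (c (\<lambda>_. 0) + L h))) (multi_indices - F)"
          using hD by (rule has_sum_uminusI)
        then have b: "- (R y - (c (\<lambda>_. 0) + L h)) \<le> infsum g (multi_indices - F)"
          using has_sum_mono[OF _ has_sum_infsum[OF gs]] bound by force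
        show ?thesis using a b by linarith
      qed
      have "infsum g (multi_indices - F) \<le> infsum g multi_indices"
      proof (rule infsum_mono_neutral[OF gs])
        show "g summable_on multi_indices" unfolding g_def by (intro summable_on_cmult_left abs_sum)
      qed (use s0 in \<open>auto simp: g_def\<close>)
      also have "infsum g multi_indices = Mt * (norm h / s)\<^sup>2"
        unfolding g_def Mt_def by (rule infsum_cmult_left') 
      finally have le2: "\<bar>R y - R x0 - L h\<bar> \<le> Mt * (norm h / s)\<^sup>2"
        using le1 R0 by simp
      have "Mt * (norm h / s)\<^sup>2 = (Mt * norm h / s\<^sup>2) * norm h"
        by (simp add: power2_eq_square)
      also have "\<dots> \<le> e * norm h"
      proof (intro mult_right_mono)
        have "norm h \<le> e * s\<^sup>2 / (Mt + 1)" using y by (simp add: h_def \<delta>_def)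
        then have "Mt * norm h \<le> Mt * (e * s\<^sup>2 / (Mt + 1))" using Mt0 by (rule mult_left_mono)
        also have "\<dots> \<le> e * s\<^sup>2" using Mt0 e s0 by (simp add: field_simps)
        finally show "Mt * norm h / s\<^sup>2 \<le> e" using s0 by (simp add: field_simps)
      qed simp
      finally show "norm (R y - R x0 - L (y - x0)) \<le> e * norm (y - x0)"
        using le2 by (simp add: h_def)
    qed
  qed
qed


lemma analytic_1d_series:
  fixes \<psi> :: "real \<Rightarrow> real"
  assumes "real_analytic_on \<psi> UNIV"
  shows "\<exists>r>0. \<exists>a. \<forall>z. \<bar>z\<bar> < r \<longrightarrow> (\<lambda>n. a n * z ^ n) sums \<psi> (x0 + z)"
proof -
  obtain r c where r: "r > 0" and hs: "\<And>x. x \<in> ball x0 r \<Longrightarrow>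
      ((\<lambda>\<alpha>. c \<alpha> * (\<Prod>b\<in>Basis. ((x - x0) \<bullet> b) ^ \<alpha> b)) has_sum \<psi> x) multi_indices"
    using assms unfolding real_analytic_on_def by blast
  define e where "e = (\<lambda>n::nat. \<lambda>b::real. if b = 1 then n else 0)"
  have bij: "bij_betw e UNIV (multi_indices :: (real \<Rightarrow> nat) set)"
    unfolding bij_betw_def
  proof
    show "inj e" by (auto simp: inj_def e_def fun_eq_iff)
    show "range e = multi_indices"
    proof
      show "range e \<subseteq> multi_indices" by (auto simp: e_def multi_indices_def)
      show "multi_indices \<subseteq> range e"
      proof
        fix \<alpha> :: "real \<Rightarrow> nat" assume "\<alpha> \<in> multi_indices"
        then have "\<alpha> = e (\<alpha> 1)" by (auto simp: multi_indices_def e_def fun_eq_iff)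
        then show "\<alpha> \<in> range e" by blast
      qed
    qed
  qed
  define a where "a n = c (e n)" for n
  show ?thesis
  proof (intro exI[of _ r] exI[of _ a] conjI allI impI r)
    fix z :: real assume z: "\<bar>z\<bar> < r"
    have "((\<lambda>\<alpha>. c \<alpha> * (\<Prod>b\<in>Basis. ((x0 + z - x0) \<bullet> b) ^ \<alpha> b)) has_sum \<psi> (x0 + z)) multi_indices"
      using hs[of "x0 + z"] z by (simp add: dist_norm)
    then have "((\<lambda>\<alpha>. c \<alpha> * z ^ \<alpha> 1) has_sum \<psi> (x0 + z)) multi_indices" by simp
    then have "((\<lambda>n. c (e n) * z ^ (e n 1)) has_sum \<psi> (x0 + z)) UNIV"
      using has_sum_reindex_bij_betw[OF bij, of "\<lambda>\<alpha>. c \<alpha> * z ^ \<alpha> 1"] by simp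
    then have "((\<lambda>n. a n * z ^ n) has_sum \<psi> (x0 + z)) UNIV" by (simp add: a_def e_def)
    then show "(\<lambda>n. a n * z ^ n) sums \<psi> (x0 + z)" by (rule has_sum_imp_sums)
  qed
qed

lemma analytic_1d_deriv:
  fixes \<psi> :: "real \<Rightarrow> real"
  assumes "real_analytic_on \<psi> UNIV"
  shows "((deriv ^^ k) \<psi> has_real_derivative (deriv ^^ Suc k) \<psi> x0) (at x0)"
proof -
  obtain r a where r: "r > 0" and sm: "\<And>z. \<bar>z\<bar> < r \<Longrightarrow> (\<lambda>n. a n * z ^ n) sums \<psi> (x0 + z)"
    using analytic_1d_series[OF assms] by blast
  have summ: "\<And>z. \<bar>z\<bar> < r \<Longrightarrow> summable (\<lambda>n. (diffs ^^ m) a n * z ^ n)" for m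
  proof (induction m)
    case 0 then show ?case using sm sums_summable by fastforce
  next
    case (Suc m)
    then show ?case using termdiff_converges[of _ r "(diffs ^^ m) a"] by simp
  qed
  have main: "\<forall>z. \<bar>z\<bar> < r \<longrightarrow> (deriv ^^ m) \<psi> (x0 + z) = (\<Sum>n. (diffs ^^ m) a n * z ^ n)" for m
  proof (induction m)
    case 0 then show ?case using sm sums_unique by fastforce
  next
    case (Suc m)
    show ?case
    proof (intro allI impI)
      fix z :: real assume z: "\<bar>z\<bar> < r"
      define P where "P = (\<lambda>w. \<Sum>n. (diffs ^^ m) a n * w ^ n)"
      have dP: "(P has_real_derivative (\<Sum>n. diffs ((diffs ^^ m) a) n * z ^ n)) (at z)"
        unfolding P_def using summ z by (intro termdiffs_strong'[of r]) auto
      have "((\<lambda>x. P (x - x0)) has_real_derivative (\<Sum>n. diffs ((diffs ^^ m) a) n * z ^ n) * 1) (at (x0 + z))"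
        apply (rule DERIV_chain2[where f = P and g = "\<lambda>x. x - x0"])
        using dP apply simp
        by (auto intro!: derivative_eq_intros)
      then have "((\<lambda>x. P (x - x0)) has_real_derivative (\<Sum>n. diffs ((diffs ^^ m) a) n * z ^ n)) (at (x0 + z))" by simp
      then have "((deriv ^^ m) \<psi> has_real_derivative (\<Sum>n. diffs ((diffs ^^ m) a) n * z ^ n)) (at (x0 + z))"
      proof (rule has_field_derivative_transform_within_open[where S = "ball x0 r"])
        show "open (ball x0 r)" by simp
        show "x0 + z \<in> ball x0 r" using z by (simp add: dist_norm)
        fix x assume "x \<in> ball x0 r"
        then have "\<bar>x - x0\<bar> < r" by (simp add: dist_norm abs_minus_commute)
        then have "(deriv ^^ m) \<psi> (x0 + (x - x0)) = P (x - x0)" using Suc.IH unfolding P_def by blast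
        then show "P (x - x0) = (deriv ^^ m) \<psi> x" by simp
      qed
      then show "(deriv ^^ Suc m) \<psi> (x0 + z) = (\<Sum>n. (diffs ^^ Suc m) a n * z ^ n)"
        by (simp add: DERIV_imp_deriv)
    qed
  qed
  define P where "P = (\<lambda>w. \<Sum>n. (diffs ^^ k) a n * w ^ n)"
  have dP: "(P has_real_derivative (\<Sum>n. diffs ((diffs ^^ k) a) n * 0 ^ n)) (at 0)"
    unfolding P_def using summ r by (intro termdiffs_strong'[of r]) auto
  have "((\<lambda>x. P (x - x0)) has_real_derivative (\<Sum>n. diffs ((diffs ^^ k) a) n * 0 ^ n) * 1) (at x0)"
    apply (rule DERIV_chain2[where f = P and g = "\<lambda>x. x - x0"])
    using dP apply simp
    by (auto intro!: derivative_eq_intros)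
  then have "((\<lambda>x. P (x - x0)) has_real_derivative (\<Sum>n. diffs ((diffs ^^ k) a) n * 0 ^ n)) (at x0)" by simp
  then have "((deriv ^^ k) \<psi> has_real_derivative (\<Sum>n. diffs ((diffs ^^ k) a) n * 0 ^ n)) (at x0)"
  proof (rule has_field_derivative_transform_within_open[where S = "ball x0 r"])
    show "open (ball x0 r)" by simp
    show "x0 \<in> ball x0 r" using r by simp
    fix x assume "x \<in> ball x0 r"
    then have "\<bar>x - x0\<bar> < r" by (simp add: dist_norm abs_minus_commute)
    then have "(deriv ^^ k) \<psi> (x0 + (x - x0)) = P (x - x0)" using main unfolding P_def by blast
    then show "P (x - x0) = (deriv ^^ k) \<psi> x" by simp
  qed
  moreover have "(deriv ^^ Suc k) \<psi> x0 = (\<Sum>n. diffs ((diffs ^^ k) a) n * 0 ^ n)"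
    using main[of "Suc k"] r by (metis abs_zero add_0_right funpow.simps(2) o_apply)
  ultimately show ?thesis by simp
qed


lemma int_cont_mult:
  fixes \<mu> :: "'x::euclidean_space measure" and \<phi> :: "'x \<Rightarrow> real"
  assumes "continuous_on UNIV \<phi>" "compact S" "AE x in \<mu>. x \<in> S" "integrable \<mu> w"
    "sets \<mu> = sets borel"
  shows "integrable \<mu> (\<lambda>x. \<phi> x * w x)"
proof -
  have m\<phi>: "\<phi> \<in> borel_measurable \<mu>"
    using borel_measurable_continuous_onI[OF assms(1)] measurable_cong_sets[OF assms(5) refl] by blast
  have wm: "w \<in> borel_measurable \<mu>" using assms(4) by auto
  have "compact (\<phi> ` S)" using assms(1,2) by (meson compact_continuous_image continuous_on_subset subset_UNIV)
  then obtain B where B: "\<And>x. x \<in> S \<Longrightarrow> \<bar>\<phi> x\<bar> \<le> B"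
    using compact_imp_bounded[of "\<phi> ` S"] by (auto simp: bounded_iff)
  show ?thesis
  proof (rule Bochner_Integration.integrable_bound[where f = "\<lambda>x. B * w x"])
    show "integrable \<mu> (\<lambda>x. B * w x)" using assms(4) by simp
    show "(\<lambda>x. \<phi> x * w x) \<in> borel_measurable \<mu>" using m\<phi> wm by measurable
    show "AE x in \<mu>. norm (\<phi> x * w x) \<le> norm (B * w x)"
      using assms(3)
    proof eventually_elim
      case (elim x)
      then have "\<bar>\<phi> x\<bar> \<le> B" by (rule B)
      then have "\<bar>\<phi> x\<bar> * \<bar>w x\<bar> \<le> \<bar>B\<bar> * \<bar>w x\<bar>" by (intro mult_right_mono) auto
      then show ?case by (simp add: abs_mult)
    qed
  qed
qed

lemma unif_cont_compact:
  fixes F :: "'a::euclidean_space \<times> 'x::euclidean_space \<Rightarrow> real"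
  assumes "continuous_on UNIV F" "compact S" "e > 0"
  shows "\<exists>d>0. \<forall>x\<in>S. \<forall>k. dist k \<theta> < d \<longrightarrow> \<bar>F (k, x) - F (\<theta>, x)\<bar> < e"
proof -
  have "compact (cball \<theta> 1 \<times> S)" using assms(2) by (simp add: compact_Times)
  then have "uniformly_continuous_on (cball \<theta> 1 \<times> S) F"
    using assms(1) by (meson compact_uniformly_continuous continuous_on_subset subset_UNIV)
  from this[unfolded uniformly_continuous_on_def, rule_format, OF assms(3)]
  obtain d where d: "d > 0" and hd: "\<forall>p\<in>cball \<theta> 1 \<times> S. \<forall>q\<in>cball \<theta> 1 \<times> S.
      dist q p < d \<longrightarrow> dist (F q) (F p) < e"
    by blast
  show ?thesis
  proof (intro exI[of _ "min d 1"] conjI ballI allI impI)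
    fix x k assume x: "x \<in> S" and k: "dist k \<theta> < min d 1"
    have "dist (k, x) (\<theta>, x) < d" using k by (simp add: dist_Pair_Pair)
    moreover have "(k, x) \<in> cball \<theta> 1 \<times> S" "(\<theta>, x) \<in> cball \<theta> 1 \<times> S"
      using x k by (auto simp: dist_commute)
    ultimately have "dist (F (k, x)) (F (\<theta>, x)) < e" using hd by simp
    then show "\<bar>F (k, x) - F (\<theta>, x)\<bar> < e" by (simp add: dist_real_def)
  qed (use d in auto)
qed


lemma linear_repr:
  fixes f :: "'a::euclidean_space \<Rightarrow> real"
  assumes "linear f"
  shows "f h = (\<Sum>b\<in>Basis. (h \<bullet> b) * f b)"
proof -
  have "f h = f (\<Sum>b\<in>Basis. (h \<bullet> b) *\<^sub>R b)" by (simp add: euclidean_representation)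
  also have "\<dots> = (\<Sum>b\<in>Basis. (h \<bullet> b) * f b)"
    using assms by (simp add: linear_sum linear_scale)
  finally show ?thesis .
qed

lemma diff_under_int:
  fixes \<mu> :: "'x::euclidean_space measure"
    and g :: "'a::euclidean_space \<Rightarrow> 'x \<Rightarrow> real" and G :: "'a \<Rightarrow> 'x \<Rightarrow> 'a \<Rightarrow> real"
  assumes fin: "finite_measure \<mu>" and sets: "sets \<mu> = sets borel"
    and S: "compact S" "AE x in \<mu>. x \<in> S" and w: "integrable \<mu> w"
    and gcont: "continuous_on UNIV (\<lambda>p. g (fst p) (snd p))"
    and der: "\<And>k x. ((\<lambda>k. g k x) has_derivative G k x) (at k)"
    and Gcont: "\<And>b. b \<in> Basis \<Longrightarrow> continuous_on UNIV (\<lambda>p. G (fst p) (snd p) b)"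
  shows "((\<lambda>k. \<integral>x. g k x * w x \<partial>\<mu>) has_derivative (\<lambda>h. \<integral>x. G \<theta> x h * w x \<partial>\<mu>)) (at \<theta>)"
proof -
  have linG: "linear (G k x)" for k x using der[of x k] has_derivative_linear by blast
  have reprG: "G k x h = (\<Sum>b\<in>Basis. (h \<bullet> b) * G k x b)" for k x h
    using linear_repr[OF linG] .
  have contb: "continuous_on UNIV (\<lambda>x. G k x b)" if "b \<in> Basis" for k b
  proof -
    have "continuous_on UNIV (\<lambda>x::'x. (k, x))" by (intro continuous_intros)
    from continuous_on_compose2[OF Gcont[OF that] this] show ?thesis by simp
  qed
  have contG: "continuous_on UNIV (\<lambda>x. G k x h)" for k h
    by (subst reprG[of k _ h]) (intro continuous_intros contb)
  have contg: "continuous_on UNIV (\<lambda>x. g k x)" for k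
  proof -
    have "continuous_on UNIV (\<lambda>x::'x. (k, x))" by (intro continuous_intros)
    from continuous_on_compose2[OF gcont this] show ?thesis by simp
  qed
  have intg: "integrable \<mu> (\<lambda>x. g k x * w x)" for k
    by (rule int_cont_mult[OF contg S w sets])
  have intG: "integrable \<mu> (\<lambda>x. G k x h * w x)" for k h
    by (rule int_cont_mult[OF contG S w sets])
  have Deq: "(\<lambda>h. \<integral>x. G \<theta> x h * w x \<partial>\<mu>) = (\<lambda>h. \<Sum>b\<in>Basis. (h \<bullet> b) * (\<integral>x. G \<theta> x b * w x \<partial>\<mu>))"
  proof
    fix h
    have "(\<integral>x. G \<theta> x h * w x \<partial>\<mu>) = (\<integral>x. (\<Sum>b\<in>Basis. (h \<bullet> b) * (G \<theta> x b * w x)) \<partial>\<mu>)"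
      by (simp add: reprG[of \<theta> _ h] sum_distrib_right mult.assoc)
    also have "\<dots> = (\<Sum>b\<in>Basis. (\<integral>x. (h \<bullet> b) * (G \<theta> x b * w x) \<partial>\<mu>))"
      by (rule Bochner_Integration.integral_sum) (use intG in auto)
    also have "\<dots> = (\<Sum>b\<in>Basis. (h \<bullet> b) * (\<integral>x. G \<theta> x b * w x \<partial>\<mu>))"
      by simp
    finally show "(\<integral>x. G \<theta> x h * w x \<partial>\<mu>) = (\<Sum>b\<in>Basis. (h \<bullet> b) * (\<integral>x. G \<theta> x b * w x \<partial>\<mu>))" .
  qed
  have bl: "bounded_linear (\<lambda>h. \<integral>x. G \<theta> x h * w x \<partial>\<mu>)"
    unfolding Deq by (intro bounded_linear_intros)
  define W where "W = (\<integral>x. \<bar>w x\<bar> \<partial>\<mu>)"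
  have W0: "W \<ge> 0" unfolding W_def by simp
  show ?thesis
  proof (unfold has_derivative_at_alt, intro conjI allI impI bl)
    fix e :: real assume e: "e > 0"
    define e' where "e' = e / (W + 1)"
    have e': "e' > 0" using e W0 by (simp add: e'_def)
    define \<Phi> where "\<Phi> = (\<lambda>p. \<Sum>b\<in>Basis. \<bar>G (fst p) (snd p) b - G \<theta> (snd p) b\<bar>)"
    have c\<Phi>: "continuous_on UNIV \<Phi>"
    proof -
      have "continuous_on UNIV (\<lambda>p::'a\<times>'x. G \<theta> (snd p) b)" if "b \<in> Basis" for b
      proof -
        have "continuous_on UNIV (\<lambda>p::'a\<times>'x. snd p)" by (intro continuous_intros)
        from continuous_on_compose2[OF contb[OF that, of \<theta>] this] show ?thesis by simp
      qed
      then show ?thesis unfolding \<Phi>_def by (intro continuous_intros Gcont) auto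
    qed
    obtain d where d: "d > 0" and hd: "\<And>x k. x \<in> S \<Longrightarrow> dist k \<theta> < d \<Longrightarrow> \<bar>\<Phi> (k, x) - \<Phi> (\<theta>, x)\<bar> < e'"
      using unif_cont_compact[OF c\<Phi> S(1) e', of \<theta>] by blast
    have on: "\<bar>G k x h - G \<theta> x h\<bar> \<le> e' * norm h" if "x \<in> S" "dist k \<theta> < d" for x k h
    proof -
      have "G k x h - G \<theta> x h = (\<Sum>b\<in>Basis. (h \<bullet> b) * (G k x b - G \<theta> x b))"
        by (simp add: reprG[of k x h] reprG[of \<theta> x h] sum_subtractf right_diff_distrib)
      then have "\<bar>G k x h - G \<theta> x h\<bar> \<le> (\<Sum>b\<in>Basis. \<bar>h \<bullet> b\<bar> * \<bar>G k x b - G \<theta> x b\<bar>)"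
        by (metis (no_types, lifting) abs_mult sum.cong sum_abs)
      also have "\<dots> \<le> (\<Sum>b\<in>Basis. norm h * \<bar>G k x b - G \<theta> x b\<bar>)"
        by (intro sum_mono mult_right_mono) (auto simp: Basis_le_norm)
      also have "\<dots> = norm h * \<Phi> (k, x)" by (simp add: \<Phi>_def sum_distrib_left)
      also have "\<dots> \<le> norm h * e'"
      proof -
        have "\<Phi> (\<theta>, x) = 0" by (simp add: \<Phi>_def)
        then have "\<Phi> (k, x) \<le> e'" using hd[OF that] by simp
        then show ?thesis by (simp add: mult_left_mono)
      qed
      finally show ?thesis by (simp add: mult.commute)
    qed
    show "\<exists>d>0. \<forall>y. norm (y - \<theta>) < d \<longrightarrow>
       norm ((\<integral>x. g y x * w x \<partial>\<mu>) - (\<integral>x. g \<theta> x * w x \<partial>\<mu>) - (\<integral>x. G \<theta> x (y - \<theta>) * w x \<partial>\<mu>))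
        \<le> e * norm (y - \<theta>)"
    proof (intro exI[of _ d] conjI allI impI d)
      fix y assume y: "norm (y - \<theta>) < d"
      have pt: "\<bar>g y x - g \<theta> x - G \<theta> x (y - \<theta>)\<bar> \<le> e' * norm (y - \<theta>)" if x: "x \<in> S" for x
      proof -
        define u where "u k = g k x - G \<theta> x k" for k
        have blG: "bounded_linear (G \<theta> x)" using der[of x \<theta>] by (rule has_derivative_bounded_linear)
        have du: "(u has_derivative (\<lambda>h. G k x h - G \<theta> x h)) (at k within ball \<theta> d)" for k
        proof -
          have "((\<lambda>k. g k x - G \<theta> x k) has_derivative (\<lambda>h. G k x h - G \<theta> x h)) (at k)"
            by (rule has_derivative_diff[OF der bounded_linear_imp_has_derivative[OF blG]])
          then show ?thesis unfolding u_def by (rule has_derivative_at_withinI)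
        qed
        have "norm (u y - u \<theta>) \<le> e' * norm (y - \<theta>)"
        proof (rule differentiable_bound[OF convex_ball du])
          fix k assume "k \<in> ball \<theta> d"
          then have "dist k \<theta> < d" by (simp add: dist_commute)
          then show "onorm (\<lambda>h. G k x h - G \<theta> x h) \<le> e'"
            using on[OF x] by (intro onorm_le) simp
        qed (use y d in \<open>auto simp: dist_norm norm_minus_commute\<close>)
        moreover have "u y - u \<theta> = g y x - g \<theta> x - G \<theta> x (y - \<theta>)"
          unfolding u_def using linear_diff[OF linG[of \<theta> x]] by simp
        ultimately show ?thesis by simp
      qed
      have "(\<integral>x. g y x * w x \<partial>\<mu>) - (\<integral>x. g \<theta> x * w x \<partial>\<mu>) - (\<integral>x. G \<theta> x (y - \<theta>) * w x \<partial>\<mu>)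
          = (\<integral>x. (g y x - g \<theta> x - G \<theta> x (y - \<theta>)) * w x \<partial>\<mu>)"
        using intg intG by (simp add: left_diff_distrib)
      also have "norm \<dots> \<le> (\<integral>x. \<bar>(g y x - g \<theta> x - G \<theta> x (y - \<theta>)) * w x\<bar> \<partial>\<mu>)"
        by simp
      also have "\<dots> \<le> (\<integral>x. e' * norm (y - \<theta>) * \<bar>w x\<bar> \<partial>\<mu>)"
      proof (rule integral_mono_AE)
        show "integrable \<mu> (\<lambda>x. \<bar>(g y x - g \<theta> x - G \<theta> x (y - \<theta>)) * w x\<bar>)"
          using intg intG by (intro integrable_abs) (simp add: left_diff_distrib)
        show "integrable \<mu> (\<lambda>x. e' * norm (y - \<theta>) * \<bar>w x\<bar>)" using w by simp
        show "AE x in \<mu>. \<bar>(g y x - g \<theta> x - G \<theta> x (y - \<theta>)) * w x\<bar> \<le> e' * norm (y - \<theta>) * \<bar>w x\<bar>"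
          using S(2)
        proof eventually_elim
          case (elim x)
          show ?case using pt[OF elim] by (simp add: abs_mult mult_right_mono)
        qed
      qed
      also have "\<dots> = e' * norm (y - \<theta>) * W" by (simp add: W_def)
      also have "\<dots> \<le> e * norm (y - \<theta>)"
      proof -
        have "e' * W \<le> e" using e W0 by (simp add: e'_def field_simps)
        then show ?thesis by (metis mult.commute mult.left_commute mult_right_mono norm_ge_zero)
      qed
      finally show "norm ((\<integral>x. g y x * w x \<partial>\<mu>) - (\<integral>x. g \<theta> x * w x \<partial>\<mu>) - (\<integral>x. G \<theta> x (y - \<theta>) * w x \<partial>\<mu>))
        \<le> e * norm (y - \<theta>)" .
    qed
  qed
qed


lemma abs_le_sq1: "\<bar>t::real\<bar> \<le> 1 + t\<^sup>2"
proof (cases "\<bar>t\<bar> \<le> 1")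
  case True then show ?thesis by (smt (verit) zero_le_power2)
next
  case False
  then have "\<bar>t\<bar> * 1 \<le> \<bar>t\<bar> * \<bar>t\<bar>" by (intro mult_left_mono) auto
  then show ?thesis by (simp add: power2_eq_square abs_mult_self_eq)
qed

definition goodrv :: "'w measure \<Rightarrow> ('w \<Rightarrow> real) \<Rightarrow> bool" where
  "goodrv P X \<longleftrightarrow> X \<in> borel_measurable P \<and> integrable P X \<and> integrable P (\<lambda>\<omega>. (X \<omega>)\<^sup>2)"

lemma gauss_good:
  assumes P: "prob_space P" and s: "\<sigma> > 0" and D: "distributed P lborel X (normal_density \<mu> \<sigma>)"
  shows "goodrv P X"
proof -
  interpret prob_space P by (rule P)
  have mX: "X \<in> borel_measurable P"
    using distributed_measurable[OF D] by (simp add: measurable_lborel2)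
  define c where "c = (\<integral>\<omega>. X \<omega> \<partial>P)"
  have "(\<integral>\<omega>. (X \<omega> - c)\<^sup>2 \<partial>P) = \<sigma>\<^sup>2"
    unfolding c_def by (rule normal_distributed_variance[OF s D])
  then have i1: "integrable P (\<lambda>\<omega>. (X \<omega> - c)\<^sup>2)"
    using s not_integrable_integral_eq by force
  have i2: "integrable P (\<lambda>\<omega>. X \<omega> - c)"
  proof (rule Bochner_Integration.integrable_bound[where f = "\<lambda>\<omega>. 1 + (X \<omega> - c)\<^sup>2"])
    show "integrable P (\<lambda>\<omega>. 1 + (X \<omega> - c)\<^sup>2)" using i1 by simp
    show "(\<lambda>\<omega>. X \<omega> - c) \<in> borel_measurable P" using mX by measurable
    show "AE \<omega> in P. norm (X \<omega> - c) \<le> norm (1 + (X \<omega> - c)\<^sup>2)"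
    proof (intro AE_I2)
      fix \<omega>
      have "\<bar>X \<omega> - c\<bar> \<le> 1 + (X \<omega> - c)\<^sup>2" by (rule abs_le_sq1)
      then show "norm (X \<omega> - c) \<le> norm (1 + (X \<omega> - c)\<^sup>2)" by simp
    qed
  qed
  have iX: "integrable P X"
  proof -
    have "integrable P (\<lambda>\<omega>. (X \<omega> - c) + c)" by (rule Bochner_Integration.integrable_add[OF i2]) simp
    then show ?thesis by simp
  qed
  have iX2: "integrable P (\<lambda>\<omega>. (X \<omega>)\<^sup>2)"
  proof -
    have "integrable P (\<lambda>\<omega>. (X \<omega> - c)\<^sup>2 + 2 * c * (X \<omega> - c) + c\<^sup>2)" using i1 i2 by simp
    moreover have "(X \<omega>)\<^sup>2 = (X \<omega> - c)\<^sup>2 + 2 * c * (X \<omega> - c) + c\<^sup>2" for \<omega>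
      by (simp add: power2_eq_square algebra_simps)
    ultimately show ?thesis by simp
  qed
  show ?thesis unfolding goodrv_def using mX iX iX2 by blast
qed

lemma good_prod:
  assumes "goodrv P X" "goodrv P Y"
  shows "integrable P (\<lambda>\<omega>. X \<omega> * Y \<omega>)"
proof (rule Bochner_Integration.integrable_bound[where f = "\<lambda>\<omega>. (X \<omega>)\<^sup>2 + (Y \<omega>)\<^sup>2"])
  show "integrable P (\<lambda>\<omega>. (X \<omega>)\<^sup>2 + (Y \<omega>)\<^sup>2)" using assms by (simp add: goodrv_def)
  have [measurable]: "X \<in> borel_measurable P" "Y \<in> borel_measurable P" using assms by (simp_all add: goodrv_def)
  show "(\<lambda>\<omega>. X \<omega> * Y \<omega>) \<in> borel_measurable P" by measurable
  show "AE \<omega> in P. norm (X \<omega> * Y \<omega>) \<le> norm ((X \<omega>)\<^sup>2 + (Y \<omega>)\<^sup>2)"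
  proof (intro AE_I2)
    fix \<omega>
    have "2 * \<bar>X \<omega>\<bar> * \<bar>Y \<omega>\<bar> \<le> (X \<omega>)\<^sup>2 + (Y \<omega>)\<^sup>2"
      using sum_squares_bound[of "\<bar>X \<omega>\<bar>" "\<bar>Y \<omega>\<bar>"] by simp
    moreover have "\<bar>X \<omega>\<bar> * \<bar>Y \<omega>\<bar> \<le> 2 * \<bar>X \<omega>\<bar> * \<bar>Y \<omega>\<bar>" by (simp add: mult.assoc)
    ultimately have "\<bar>X \<omega>\<bar> * \<bar>Y \<omega>\<bar> \<le> (X \<omega>)\<^sup>2 + (Y \<omega>)\<^sup>2" by linarith
    then show "norm (X \<omega> * Y \<omega>) \<le> norm ((X \<omega>)\<^sup>2 + (Y \<omega>)\<^sup>2)"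
      by (simp add: abs_mult)
  qed
qed

lemma good_affine:
  assumes "goodrv P X" "prob_space P"
  shows "goodrv P (\<lambda>\<omega>. a * X \<omega> + b)"
proof -
  interpret prob_space P by fact
  have "integrable P (\<lambda>\<omega>. a\<^sup>2 * (X \<omega>)\<^sup>2 + 2 * a * b * X \<omega> + b\<^sup>2)"
    using assms(1) by (simp add: goodrv_def)
  moreover have "(a * X \<omega> + b)\<^sup>2 = a\<^sup>2 * (X \<omega>)\<^sup>2 + 2 * a * b * X \<omega> + b\<^sup>2" for \<omega>
    by (simp add: power2_eq_square algebra_simps)
  moreover have [measurable]: "X \<in> borel_measurable P" using assms by (simp_all add: goodrv_def)
  moreover have "(\<lambda>\<omega>. a * X \<omega> + b) \<in> borel_measurable P" by measurable
  ultimately show ?thesis using assms(1) by (simp add: goodrv_def)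
qed

lemma good_sum:
  assumes "finite I" "\<And>a. a \<in> I \<Longrightarrow> goodrv P (X a)" "prob_space P"
  shows "goodrv P (\<lambda>\<omega>. \<Sum>a\<in>I. X a \<omega>)"
  using assms(1,2)
proof (induction I rule: finite_induct)
  case empty
  interpret prob_space P by fact
  show ?case by (simp add: goodrv_def)
next
  case (insert a F)
  have ga: "goodrv P (X a)" and gF: "goodrv P (\<lambda>\<omega>. \<Sum>a\<in>F. X a \<omega>)" using insert by auto
  have "integrable P (\<lambda>\<omega>. (X a \<omega>)\<^sup>2 + 2 * (X a \<omega> * (\<Sum>a\<in>F. X a \<omega>)) + (\<Sum>a\<in>F. X a \<omega>)\<^sup>2)"
    using ga gF good_prod[OF ga gF] by (simp add: goodrv_def)
  moreover have "(X a \<omega> + (\<Sum>a\<in>F. X a \<omega>))\<^sup>2 = (X a \<omega>)\<^sup>2 + 2 * (X a \<omega> * (\<Sum>a\<in>F. X a \<omega>)) + (\<Sum>a\<in>F. X a \<omega>)\<^sup>2" for \<omega>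
    by (simp add: power2_eq_square algebra_simps)
  ultimately have sq: "integrable P (\<lambda>\<omega>. (X a \<omega> + (\<Sum>a\<in>F. X a \<omega>))\<^sup>2)" by simp
  have [measurable]: "X a \<in> borel_measurable P" "(\<lambda>\<omega>. \<Sum>a\<in>F. X a \<omega>) \<in> borel_measurable P"
    using ga gF by (simp_all add: goodrv_def)
  have "(\<lambda>\<omega>. X a \<omega> + (\<Sum>a\<in>F. X a \<omega>)) \<in> borel_measurable P" by measurable
  moreover have "integrable P (\<lambda>\<omega>. X a \<omega> + (\<Sum>a\<in>F. X a \<omega>))"
    using ga gF by (intro Bochner_Integration.integrable_add) (simp_all add: goodrv_def)
  ultimately show ?case using sq insert.hyps by (simp add: goodrv_def)
qed

lemma cov_degenerate:
  fixes Z :: "'w \<Rightarrow> 'k \<Rightarrow> real" and X :: "'k \<Rightarrow> 'w \<Rightarrow> real"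
  assumes P: "prob_space P" and fin: "finite I"
    and good: "\<And>a. a \<in> I \<Longrightarrow> goodrv P (X a)"
    and Zeq: "\<And>\<omega> a. \<omega> \<in> space P \<Longrightarrow> a \<in> I \<Longrightarrow> Z \<omega> a = A a + X a \<omega>"
    and hyp: "\<And>a. a \<in> I \<Longrightarrow> (\<Sum>b\<in>I. cov_matrix P Z a b * c b) = 0"
    and Yeq: "\<And>\<omega>. \<omega> \<in> space P \<Longrightarrow> Y \<omega> = (\<Sum>a\<in>I. c a * X a \<omega>)"
    and s: "\<sigma> > 0" and D: "distributed P lborel Y (normal_density \<mu> \<sigma>)"
  shows False
proof -
  interpret prob_space P by (rule P)
  define U where "U = (\<lambda>a \<omega>. X a \<omega> - (\<integral>\<omega>. X a \<omega> \<partial>P))"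
  have gU: "goodrv P (U a)" if "a \<in> I" for a
    using good_affine[OF good[OF that] P, of 1 "- (\<integral>\<omega>. X a \<omega> \<partial>P)"] by (simp add: U_def)
  have EZ: "(\<integral>\<omega>. Z \<omega> a \<partial>P) = A a + (\<integral>\<omega>. X a \<omega> \<partial>P)" if "a \<in> I" for a
  proof -
    have "(\<integral>\<omega>. Z \<omega> a \<partial>P) = (\<integral>\<omega>. A a + X a \<omega> \<partial>P)"
      using Zeq[OF _ that] by (intro Bochner_Integration.integral_cong) auto
    also have "\<dots> = A a + (\<integral>\<omega>. X a \<omega> \<partial>P)"
      using good[OF that] by (simp add: goodrv_def prob_space)
    finally show ?thesis .
  qed
  have cov: "cov_matrix P Z a b = (\<integral>\<omega>. U a \<omega> * U b \<omega> \<partial>P)" if "a \<in> I" "b \<in> I" for a b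
    unfolding cov_matrix_def
    by (intro Bochner_Integration.integral_cong) (auto simp: EZ that Zeq U_def)
  define V where "V \<omega> = (\<Sum>b\<in>I. c b * U b \<omega>)" for \<omega>
  have gV: "goodrv P V"
    unfolding V_def
    by (rule good_sum[OF fin _ P]) (use good_affine[OF gU P, of _ _ 0] in simp)
  have int0: "(\<integral>\<omega>. U a \<omega> * V \<omega> \<partial>P) = 0" if "a \<in> I" for a
  proof -
    have "(\<integral>\<omega>. U a \<omega> * V \<omega> \<partial>P) = (\<integral>\<omega>. (\<Sum>b\<in>I. c b * (U a \<omega> * U b \<omega>)) \<partial>P)"
      unfolding V_def by (simp add: sum_distrib_left mult_ac)
    also have "\<dots> = (\<Sum>b\<in>I. c b * (\<integral>\<omega>. U a \<omega> * U b \<omega> \<partial>P))"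
      using good_prod[OF gU gU] that
      by (subst Bochner_Integration.integral_sum) auto
    also have "\<dots> = (\<Sum>b\<in>I. cov_matrix P Z a b * c b)"
      using that by (intro sum.cong) (auto simp: cov mult.commute)
    also have "\<dots> = 0" using hyp[OF that] .
    finally show ?thesis .
  qed
  have "(\<integral>\<omega>. (V \<omega>)\<^sup>2 \<partial>P) = (\<integral>\<omega>. (\<Sum>a\<in>I. c a * (U a \<omega> * V \<omega>)) \<partial>P)"
    unfolding power2_eq_square by (simp add: V_def sum_distrib_right mult_ac)
  also have "\<dots> = (\<Sum>a\<in>I. c a * (\<integral>\<omega>. U a \<omega> * V \<omega> \<partial>P))"
    using good_prod[OF gU gV] by (subst Bochner_Integration.integral_sum) auto
  also have "\<dots> = 0" using int0 by simp
  finally have "(\<integral>\<omega>. (V \<omega>)\<^sup>2 \<partial>P) = 0" .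
  then have V0: "AE \<omega> in P. V \<omega> = 0"
    using integral_nonneg_eq_0_iff_AE[of P "\<lambda>\<omega>. (V \<omega>)\<^sup>2"] gV by (simp add: goodrv_def)
  define k where "k = (\<Sum>a\<in>I. c a * (\<integral>\<omega>. X a \<omega> \<partial>P))"
  have YV: "Y \<omega> = V \<omega> + k" if "\<omega> \<in> space P" for \<omega>
    using that by (simp add: Yeq V_def U_def k_def right_diff_distrib sum_subtractf)
  have mY: "Y \<in> borel_measurable P"
    using distributed_measurable[OF D] by (simp add: measurable_lborel2)
  have Yk: "AE \<omega> in P. Y \<omega> = k" using V0 by (auto simp: YV)
  have EY: "(\<integral>\<omega>. Y \<omega> \<partial>P) = k"
    using integral_cong_AE[OF mY _ Yk] by (simp add: prob_space)
  have "(\<integral>\<omega>. (Y \<omega> - (\<integral>\<omega>. Y \<omega> \<partial>P))\<^sup>2 \<partial>P) = 0"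
    unfolding EY using Yk by (intro integral_eq_zero_AE) auto
  moreover have "(\<integral>\<omega>. (Y \<omega> - (\<integral>\<omega>. Y \<omega> \<partial>P))\<^sup>2 \<partial>P) = \<sigma>\<^sup>2"
    by (rule normal_distributed_variance[OF s D])
  ultimately show False using s by simp
qed


lemma support_AE:
  fixes \<mu> :: "'x::second_countable_topology measure"
  assumes sets: "sets \<mu> = sets borel"
  shows "AE x in \<mu>. x \<in> msupport \<mu>"
proof -
  obtain B :: "'x set set" where B: "countable B" "\<And>C. C \<in> B \<Longrightarrow> open C"
    "\<And>S. open S \<Longrightarrow> \<exists>U. U \<subseteq> B \<and> S = \<Union>U"
    using univ_second_countable by blast
  define I where "I = {C \<in> B. emeasure \<mu> C = 0}"
  have mC: "C \<in> sets \<mu>" if "open C" for C using that sets by simp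
  have N: "(\<Union>C\<in>I. C) \<in> null_sets \<mu>"
  proof (rule null_sets_UN')
    show "countable I" using B(1) unfolding I_def by (rule countable_subset[rotated]) auto
    show "C \<in> null_sets \<mu>" if "C \<in> I" for C
      using that B(2) mC by (auto simp: I_def null_sets_def)
  qed
  show ?thesis
  proof (rule AE_I'[OF N], safe)
    fix x assume "x \<in> space \<mu>" "x \<notin> msupport \<mu>"
    then obtain U where U: "open U" "x \<in> U" "\<not> emeasure \<mu> U > 0" by (auto simp: msupport_def)
    then have U0: "emeasure \<mu> U = 0" by (simp add: not_gr_zero)
    obtain V where V: "V \<subseteq> B" "U = \<Union>V" using B(3)[OF U(1)] by blast
    then obtain C where C: "C \<in> V" "x \<in> C" using U(2) by blast
    have "emeasure \<mu> C \<le> emeasure \<mu> U"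
      using C V U(1) mC by (intro emeasure_mono) auto
    then have "emeasure \<mu> C = 0" using U0 by simp
    then have "C \<in> I" using C V by (auto simp: I_def)
    then show "x \<in> (\<Union>C\<in>I. C)" using C by blast
  qed
qed

locale kern =
  fixes PX :: "(real ^ 'i::finite) measure" and MM :: "'m measure"
    and K :: "'m \<times> (real ^ 'i) \<Rightarrow> real measure" and m :: 'm
  assumes PX_prob: "prob_space PX" and PX_borel: "sets PX = sets borel"
    and K_kernel: "K \<in> measurable (MM \<Otimes>\<^sub>M borel) (prob_algebra borel)"
    and m: "m \<in> space MM"
    and Y_sq: "(\<integral>\<^sup>+x. (\<integral>\<^sup>+y. ennreal (y\<^sup>2) \<partial>K (m, x)) \<partial>PX) < \<infinity>"
begin

definition Y2 where "Y2 x = (\<integral>y. y\<^sup>2 \<partial>K (m, x))"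

lemma Kx: "prob_space (K (m, x))" "sets (K (m, x)) = sets borel"
proof -
  have "(m, x) \<in> space (MM \<Otimes>\<^sub>M borel)" using m by (simp add: space_pair_measure)
  then have "K (m, x) \<in> space (prob_algebra borel)" by (rule measurable_space[OF K_kernel])
  then show "prob_space (K (m, x))" "sets (K (m, x)) = sets borel" by (auto simp: space_prob_algebra)
qed

lemma Km: "(\<lambda>x. K (m, x)) \<in> measurable PX (subprob_algebra borel)"
proof -
  have "Pair m \<in> measurable borel (MM \<Otimes>\<^sub>M borel)" using m by (rule measurable_Pair1')
  from measurable_compose[OF this K_kernel]
  have "(\<lambda>x. K (m, x)) \<in> measurable borel (prob_algebra borel)" by simp
  then have "(\<lambda>x. K (m, x)) \<in> measurable borel (subprob_algebra borel)" by (rule measurable_prob_algebraD)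
  then show ?thesis using measurable_cong_sets[OF PX_borel refl] by blast
qed

lemma space_PX: "space PX = UNIV"
  using sets_eq_imp_space_eq[OF PX_borel] by simp

lemma target_meas: "target K m \<in> borel_measurable PX"
proof -
  have "(\<lambda>x. integral\<^sup>L (K (m, x)) (\<lambda>y. y)) \<in> borel_measurable PX"
    by (rule measurable_compose[OF Km integral_measurable_subprob_algebra]) simp
  then show ?thesis by (simp add: target_def[abs_def])
qed

lemma Y2_meas: "Y2 \<in> borel_measurable PX"
proof -
  have "(\<lambda>x. integral\<^sup>L (K (m, x)) (\<lambda>y. y\<^sup>2)) \<in> borel_measurable PX"
    by (rule measurable_compose[OF Km integral_measurable_subprob_algebra]) simp
  then show ?thesis by (simp add: Y2_def[abs_def])
qed

lemma intK_pred: "Measurable.pred PX (\<lambda>x. integrable (K (m, x)) (\<lambda>y. y\<^sup>2))"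
  by (rule measurable_compose[OF Km integrable_measurable_subprob_algebra]) simp

lemma mK: "f \<in> borel_measurable borel \<Longrightarrow> f \<in> borel_measurable (K (m, x))"
  using measurable_cong_sets[OF Kx(2) refl] by blast

lemma AE_int: "AE x in PX. integrable (K (m, x)) (\<lambda>y. y\<^sup>2)"
proof -
  have nm: "(\<lambda>x. \<integral>\<^sup>+y. ennreal (y\<^sup>2) \<partial>K (m, x)) \<in> borel_measurable PX"
    by (rule measurable_compose[OF Km nn_integral_measurable_subprob_algebra]) simp
  have "AE x in PX. (\<integral>\<^sup>+y. ennreal (y\<^sup>2) \<partial>K (m, x)) \<noteq> \<infinity>"
    using nn_integral_PInf_AE[OF nm] Y_sq by simp
  then show ?thesis
  proof eventually_elim
    case (elim x)
    show ?case
      unfolding integrable_iff_bounded using elim mK[of "\<lambda>y. y\<^sup>2" x]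
      by (simp add: top.not_eq_extremum)
  qed
qed

lemma int_y: "integrable (K (m, x)) (\<lambda>y. y\<^sup>2) \<Longrightarrow> integrable (K (m, x)) (\<lambda>y. y)"
proof -
  assume i: "integrable (K (m, x)) (\<lambda>y. y\<^sup>2)"
  interpret prob_space "K (m, x)" by (rule Kx)
  show ?thesis
  proof (rule Bochner_Integration.integrable_bound[where f = "\<lambda>y. 1 + y\<^sup>2"])
    show "integrable (K (m, x)) (\<lambda>y. 1 + y\<^sup>2)" using i by simp
    show "(\<lambda>y. y) \<in> borel_measurable (K (m, x))" by (rule mK) simp
    show "AE y in K (m, x). norm y \<le> norm (1 + y\<^sup>2)"
      using abs_le_sq1 by (intro AE_I2) simp
  qed
qed

lemma Y2_int: "integrable PX Y2"
proof -
  have "(\<integral>\<^sup>+x. ennreal (norm (Y2 x)) \<partial>PX) = (\<integral>\<^sup>+x. (\<integral>\<^sup>+y. ennreal (y\<^sup>2) \<partial>K (m, x)) \<partial>PX)"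
  proof (rule nn_integral_cong_AE)
    show "AE x in PX. ennreal (norm (Y2 x)) = (\<integral>\<^sup>+y. ennreal (y\<^sup>2) \<partial>K (m, x))"
      using AE_int
    proof eventually_elim
      case (elim x)
      have "Y2 x \<ge> 0" unfolding Y2_def by simp
      then show ?case unfolding Y2_def
        using nn_integral_eq_integral[OF elim] by simp
    qed
  qed
  then show ?thesis unfolding integrable_iff_bounded using Y2_meas Y_sq by simp
qed

lemma target_bound: "integrable (K (m, x)) (\<lambda>y. y\<^sup>2) \<Longrightarrow> \<bar>target K m x\<bar> \<le> 1 + Y2 x"
proof -
  assume i: "integrable (K (m, x)) (\<lambda>y. y\<^sup>2)"
  interpret prob_space "K (m, x)" by (rule Kx)
  have "\<bar>target K m x\<bar> \<le> (\<integral>y. \<bar>y\<bar> \<partial>K (m, x))" unfolding target_def by (rule integral_abs_bound)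
  also have "\<dots> \<le> (\<integral>y. 1 + y\<^sup>2 \<partial>K (m, x))"
    using i int_y[OF i] abs_le_sq1 by (intro integral_mono) auto
  also have "\<dots> = 1 + Y2 x" using i by (simp add: Y2_def prob_space)
  finally show ?thesis .
qed

lemma target_int: "integrable PX (target K m)"
proof (rule Bochner_Integration.integrable_bound[where f = "\<lambda>x. 1 + Y2 x"])
  interpret prob_space PX by (rule PX_prob)
  show "integrable PX (\<lambda>x. 1 + Y2 x)" using Y2_int by simp
  show "target K m \<in> borel_measurable PX" by (rule target_meas)
  show "AE x in PX. norm (target K m x) \<le> norm (1 + Y2 x)"
    using AE_int
  proof eventually_elim
    case (elim x)
    have "Y2 x \<ge> 0" unfolding Y2_def by simp
    then show ?case using target_bound[OF elim] by simp
  qed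
qed

lemma inner_expand:
  "(\<integral>y. (r - y)\<^sup>2 \<partial>K (m, x)) =
     (if integrable (K (m, x)) (\<lambda>y. y\<^sup>2) then r\<^sup>2 - 2 * r * target K m x + Y2 x else 0)"
proof -
  interpret prob_space "K (m, x)" by (rule Kx)
  show ?thesis
  proof (cases "integrable (K (m, x)) (\<lambda>y. y\<^sup>2)")
    case True
    have "(\<integral>y. (r - y)\<^sup>2 \<partial>K (m, x)) = (\<integral>y. r\<^sup>2 - 2 * r * y + y\<^sup>2 \<partial>K (m, x))"
      by (simp add: power2_eq_square algebra_simps)
    also have "\<dots> = r\<^sup>2 - 2 * r * target K m x + Y2 x"
      using True int_y[OF True] by (simp add: target_def Y2_def prob_space)
    finally show ?thesis using True by simp
  next
    case False
    have "\<not> integrable (K (m, x)) (\<lambda>y. (r - y)\<^sup>2)"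
    proof
      assume i: "integrable (K (m, x)) (\<lambda>y. (r - y)\<^sup>2)"
      have "integrable (K (m, x)) (\<lambda>y. y\<^sup>2)"
      proof (rule Bochner_Integration.integrable_bound[where f = "\<lambda>y. 2 * (r - y)\<^sup>2 + 2 * r\<^sup>2"])
        show "integrable (K (m, x)) (\<lambda>y. 2 * (r - y)\<^sup>2 + 2 * r\<^sup>2)" using i by simp
        show "(\<lambda>y. y\<^sup>2) \<in> borel_measurable (K (m, x))" by (rule mK) simp
        show "AE y in K (m, x). norm (y\<^sup>2) \<le> norm (2 * (r - y)\<^sup>2 + 2 * r\<^sup>2)"
        proof (intro AE_I2)
          fix y :: real
          have "(2 * r - y)\<^sup>2 \<ge> 0" by simp
          moreover have "(2 * (r - y)\<^sup>2 + 2 * r\<^sup>2) - y\<^sup>2 = (2 * r - y)\<^sup>2"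
            by (simp add: power2_eq_square algebra_simps)
          ultimately have "y\<^sup>2 \<le> 2 * (r - y)\<^sup>2 + 2 * r\<^sup>2" by linarith
          then show "norm (y\<^sup>2) \<le> norm (2 * (r - y)\<^sup>2 + 2 * r\<^sup>2)" by simp
        qed
      qed
      then show False using False by simp
    qed
    then show ?thesis using False by (simp add: not_integrable_integral_eq)
  qed
qed

end


definition Gresp :: "(real \<Rightarrow> real) \<Rightarrow> ('i::finite, 'j::finite) param \<Rightarrow> real ^ 'i \<Rightarrow> ('i, 'j) param \<Rightarrow> real" where
  "Gresp \<psi> k x h = pc h + (\<Sum>j\<in>UNIV. deriv \<psi> (preact k x j) * preact h x j * pv k $ j + \<psi> (preact k x j) * pv h $ j)"

lemma hd_vec_nth[derivative_intros]:
  "(f has_derivative f') F \<Longrightarrow> ((\<lambda>x. f x $ i) has_derivative (\<lambda>h. f' h $ i)) F"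
  by (rule bounded_linear.has_derivative[OF bounded_linear_vec_nth])

lemma preact_lin:
  "preact (a + b) x j = preact a x j + preact b x j"
  "preact (t *\<^sub>R a) x j = t * preact a x j"
  by (simp_all add: preact_def pb_def pW_def sum.distrib algebra_simps sum_distrib_left)

lemma pv_lin: "pv (a + b) = pv a + pv b" "pv (t *\<^sub>R a) = t *\<^sub>R pv a"
  by (simp_all add: pv_def)

lemma preact_hasderiv:
  "((\<lambda>k. preact k x j) has_derivative (\<lambda>h. preact h x j)) F"
  unfolding preact_def pb_def pW_def
  by (intro derivative_eq_intros) auto

lemma resp_hasderiv:
  assumes d\<psi>: "\<And>t. (\<psi> has_real_derivative deriv \<psi> t) (at t)"
  shows "((\<lambda>k. resp \<psi> k x) has_derivative Gresp \<psi> k x) (at k)"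
proof -
  have a: "((\<lambda>k. \<psi> (preact k x j)) has_derivative (\<lambda>h. preact h x j * deriv \<psi> (preact k x j))) (at k)" for j
    by (rule DERIV_compose_FDERIV[OF d\<psi> preact_hasderiv])
  have b: "((\<lambda>k. pv k $ j) has_derivative (\<lambda>h. pv h $ j)) (at k)" for j
    unfolding pv_def by (intro derivative_eq_intros) auto
  have c: "((\<lambda>k. pc k) has_derivative (\<lambda>h. pc h)) (at k)"
    unfolding pc_def by (intro derivative_eq_intros) auto
  have "((\<lambda>k. pc k + (\<Sum>j\<in>UNIV. \<psi> (preact k x j) * pv k $ j)) has_derivative
     (\<lambda>h. pc h + (\<Sum>j\<in>UNIV. \<psi> (preact k x j) * pv h $ j + preact h x j * deriv \<psi> (preact k x j) * pv k $ j))) (at k)"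
    by (intro has_derivative_add c has_derivative_sum has_derivative_mult a b)
  moreover have "(\<lambda>h. pc h + (\<Sum>j\<in>UNIV. \<psi> (preact k x j) * pv h $ j + preact h x j * deriv \<psi> (preact k x j) * pv k $ j))
      = Gresp \<psi> k x"
    by (auto simp: Gresp_def fun_eq_iff algebra_simps)
  ultimately show ?thesis unfolding resp_def[abs_def] by simp
qed

lemma cont_preact: "continuous_on UNIV (\<lambda>p. preact (fst p) (snd p) j)"
  unfolding preact_def pb_def pW_def by (intro continuous_intros)

lemma cont_preact_x: "continuous_on UNIV (\<lambda>p. preact d (snd p) j)"
  unfolding preact_def pb_def pW_def by (intro continuous_intros)


lemma contc: "continuous_on UNIV f \<Longrightarrow> continuous_on S g \<Longrightarrow> continuous_on S (\<lambda>x. f (g x))"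
  by (rule continuous_on_compose2[of UNIV f S g]) auto

lemma cont_resp:
  assumes c0: "continuous_on UNIV \<psi>"
  shows "continuous_on UNIV (\<lambda>p. resp \<psi> (fst p) (snd p :: real ^ 'i::finite) :: real)"
  unfolding resp_def preact_def pc_def pv_def pb_def pW_def
  by (intro continuous_intros contc[OF c0])

lemma cont_Gresp:
  assumes c0: "continuous_on UNIV \<psi>" and c1: "continuous_on UNIV (deriv \<psi>)"
  shows "continuous_on UNIV (\<lambda>p. Gresp \<psi> (fst p) (snd p :: real ^ 'i::finite) b :: real)"
  unfolding Gresp_def preact_def pc_def pv_def pb_def pW_def
  by (intro continuous_intros contc[OF c0] contc[OF c1])

lemma pdiff_eq:
  assumes "(f has_derivative D) (at x)"
  shows "pdiff f e x = D e"
proof -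
  have lin: "linear D" using assms by (rule has_derivative_linear)
  have "((\<lambda>t. x + t *\<^sub>R e) has_derivative (\<lambda>t. t *\<^sub>R e)) (at 0)"
    by (intro derivative_eq_intros) auto
  moreover have "(f has_derivative D) (at (x + 0 *\<^sub>R e))" using assms by simp
  ultimately have "((\<lambda>t. f (x + t *\<^sub>R e)) has_derivative (\<lambda>t. D (t *\<^sub>R e))) (at 0)"
    using has_derivative_compose[of "\<lambda>t. x + t *\<^sub>R e" "\<lambda>t. t *\<^sub>R e" 0 UNIV f D] by simp
  moreover have "(\<lambda>t. D (t *\<^sub>R e)) = (*) (D e)"
    using linear_scale[OF lin] by (auto simp: fun_eq_iff)
  ultimately have "((\<lambda>t. f (x + t *\<^sub>R e)) has_real_derivative D e) (at 0)"
    by (simp add: has_field_derivative_def)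
  then show ?thesis unfolding pdiff_def by (rule DERIV_imp_deriv)
qed

context kern
begin

lemma Jhat_deriv:
  assumes d\<psi>: "\<And>t. (\<psi> has_real_derivative deriv \<psi> t) (at t)"
    and c0: "continuous_on UNIV \<psi>" and c1: "continuous_on UNIV (deriv \<psi>)"
    and S: "compact S" "AE x in PX. x \<in> S"
  shows "((Jhat \<psi> PX K m) has_derivative (\<lambda>h. \<integral>x. Gresp \<psi> k x h * target K m x \<partial>PX)) (at k)"
proof -
  have "((\<lambda>k. \<integral>x. resp \<psi> k x * target K m x \<partial>PX) has_derivative
      (\<lambda>h. \<integral>x. Gresp \<psi> k x h * target K m x \<partial>PX)) (at k)"
  proof (rule diff_under_int[OF _ PX_borel S target_int])
    show "finite_measure PX" using PX_prob by (simp add: prob_space_def)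
    show "continuous_on UNIV (\<lambda>p. resp \<psi> (fst p) (snd p))" by (rule cont_resp[OF c0])
    show "\<And>k x. ((\<lambda>k. resp \<psi> k x) has_derivative Gresp \<psi> k x) (at k)"
      by (rule resp_hasderiv[OF d\<psi>])
    show "\<And>b. continuous_on UNIV (\<lambda>p. Gresp \<psi> (fst p) (snd p) b)" by (rule cont_Gresp[OF c0 c1])
  qed
  then show ?thesis by (simp add: Jhat_def[abs_def])
qed

end

lemma Q_deriv:
  assumes d\<psi>: "\<And>t. (\<psi> has_real_derivative deriv \<psi> t) (at t)"
    and c0: "continuous_on UNIV \<psi>" and c1: "continuous_on UNIV (deriv \<psi>)"
    and S: "compact S" "AE x in PX. x \<in> S"
    and PX: "prob_space PX" "sets PX = sets borel"
  shows "\<exists>D. ((\<lambda>k::('i::finite,'j::finite) param. \<integral>x. (resp \<psi> k x)\<^sup>2 \<partial>PX) has_derivative D) (at k)"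
proof -
  interpret prob_space PX by (rule PX(1))
  have "((\<lambda>k::('i,'j) param. \<integral>x. (resp \<psi> k x)\<^sup>2 * 1 \<partial>PX) has_derivative
      (\<lambda>h. \<integral>x. (2 * resp \<psi> k x * Gresp \<psi> k x h) * 1 \<partial>PX)) (at k)"
  proof (rule diff_under_int[OF _ PX(2) S])
    show "finite_measure PX" using PX(1) by (simp add: prob_space_def)
    show "integrable PX (\<lambda>x. 1)" by simp
    show "continuous_on UNIV (\<lambda>p. (resp \<psi> (fst p) (snd p))\<^sup>2)"
      by (intro continuous_intros cont_resp[OF c0])
    show "((\<lambda>k. (resp \<psi> k x)\<^sup>2) has_derivative (\<lambda>h. 2 * resp \<psi> k x * Gresp \<psi> k x h)) (at k)" for k x
      by (rule has_derivative_eq_rhs, rule has_derivative_power[OF resp_hasderiv[OF d\<psi>]])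
         (simp add: fun_eq_iff)
    show "continuous_on UNIV (\<lambda>p. 2 * resp \<psi> (fst p) (snd p) * Gresp \<psi> (fst p) (snd p) b)" for b
      by (intro continuous_intros cont_resp[OF c0] cont_Gresp[OF c0 c1])
  qed
  then show ?thesis by auto
qed


definition dirlike :: "'j \<Rightarrow> ('i::finite, 'j::finite) param \<Rightarrow> bool" where
  "dirlike j0 d \<longleftrightarrow> pc d = 0 \<and> pv d = 0 \<and> (\<forall>x j. j \<noteq> j0 \<longrightarrow> preact d x j = 0)"

lemma Gresp_dirlike:
  assumes "dirlike j0 d"
  shows "Gresp \<psi> k x d = deriv \<psi> (preact k x j0) * preact d x j0 * pv k $ j0"
proof -
  have h: "pc d = 0" "pv d = 0" "\<And>j. j \<noteq> j0 \<Longrightarrow> preact d x j = 0" using assms by (auto simp: dirlike_def)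
  have "Gresp \<psi> k x d = (\<Sum>j\<in>UNIV. deriv \<psi> (preact k x j) * preact d x j * pv k $ j)"
    by (simp add: Gresp_def h)
  also have "\<dots> = (\<Sum>j\<in>UNIV. if j = j0 then deriv \<psi> (preact k x j0) * preact d x j0 * pv k $ j0 else 0)"
    using h(3) by (intro sum.cong) auto
  also have "\<dots> = deriv \<psi> (preact k x j0) * preact d x j0 * pv k $ j0" by simp
  finally show ?thesis .
qed

lemma dirlike_b: "dirlike j (dir_b j)"
  by (simp add: dirlike_def dir_b_def pc_def pv_def preact_def pb_def pW_def axis_def)

lemma axis2: "axis i (axis j (1::real)) $ i' $ j' = (if i' = i \<and> j' = j then 1 else 0)"
  by (simp add: axis_def)

lemma dirlike_w: "dirlike j (dir_w i j)"
  by (simp add: dirlike_def dir_w_def pc_def pv_def preact_def pb_def pW_def axis2)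

lemma preact_b: "preact (dir_b j) x j = 1"
  by (simp add: dir_b_def preact_def pb_def pW_def)

lemma preact_w: "preact (dir_w i j) x j = x $ i"
proof -
  have "preact (dir_w i j) x j = (\<Sum>i'\<in>UNIV. if i' = i then x $ i else 0)"
    unfolding dir_w_def preact_def pb_def pW_def by (simp add: axis2 if_distrib cong: if_cong)
  then show ?thesis by simp
qed

context kern
begin

lemma Jhat_second:
  assumes d\<psi>: "\<And>t. (\<psi> has_real_derivative deriv \<psi> t) (at t)"
    and d\<psi>1: "\<And>t. (deriv \<psi> has_real_derivative deriv (deriv \<psi>) t) (at t)"
    and c0: "continuous_on UNIV \<psi>" and c1: "continuous_on UNIV (deriv \<psi>)"
    and c2: "continuous_on UNIV (deriv (deriv \<psi>))"
    and S: "compact S" "AE x in PX. x \<in> S"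
    and d1: "dirlike j0 d1" and d2: "dirlike j0 d2"
  shows "pdiff (pdiff (Jhat \<psi> PX K m) d1) d2 \<theta> =
    (\<integral>x. (deriv (deriv \<psi>) (preact \<theta> x j0) * preact d2 x j0 * preact d1 x j0 * pv \<theta> $ j0) * target K m x \<partial>PX)"
proof -
  define w where "w = target K m"
  define g where "g t x = deriv \<psi> (preact \<theta> x j0 + t * preact d2 x j0) * (preact d1 x j0 * pv \<theta> $ j0)"
    for t :: real and x :: "real ^ 'i"
  define G where "G t x s = s * (deriv (deriv \<psi>) (preact \<theta> x j0 + t * preact d2 x j0) * preact d2 x j0
      * (preact d1 x j0 * pv \<theta> $ j0))" for t :: real and x :: "real ^ 'i" and s :: real
  have pd1: "pdiff (Jhat \<psi> PX K m) d1 k = (\<integral>x. Gresp \<psi> k x d1 * w x \<partial>PX)" for k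
    unfolding w_def by (rule pdiff_eq[OF Jhat_deriv[OF d\<psi> c0 c1 S]])
  have pv2: "pv (\<theta> + t *\<^sub>R d2) = pv \<theta>" for t using d2 by (simp add: dirlike_def pv_lin)
  have line: "pdiff (Jhat \<psi> PX K m) d1 (\<theta> + t *\<^sub>R d2) = (\<integral>x. g t x * w x \<partial>PX)" for t
    unfolding pd1 Gresp_dirlike[OF d1] g_def pv2 preact_lin by (simp add: mult_ac)
  have "((\<lambda>t. \<integral>x. g t x * w x \<partial>PX) has_derivative (\<lambda>s. \<integral>x. G 0 x s * w x \<partial>PX)) (at 0)"
  proof (rule diff_under_int[OF _ PX_borel S])
    show "finite_measure PX" using PX_prob by (simp add: prob_space_def)
    show "integrable PX w" unfolding w_def by (rule target_int)
    show "continuous_on UNIV (\<lambda>p. g (fst p) (snd p))"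
      unfolding g_def by (intro continuous_intros contc[OF c1] cont_preact_x) 
    show "((\<lambda>t. g t x) has_derivative G t x) (at t)" for t x
    proof -
      have "((\<lambda>t. deriv \<psi> (preact \<theta> x j0 + t * preact d2 x j0)) has_derivative
          (\<lambda>s. (s * preact d2 x j0) * deriv (deriv \<psi>) (preact \<theta> x j0 + t * preact d2 x j0))) (at t)"
        by (rule DERIV_compose_FDERIV[OF d\<psi>1]) (intro derivative_eq_intros, auto)
      then show ?thesis unfolding g_def G_def
        by (rule has_derivative_eq_rhs[OF has_derivative_mult_left]) (auto simp: fun_eq_iff mult_ac)
    qed
    show "continuous_on UNIV (\<lambda>p. G (fst p) (snd p) b)" for b
      unfolding G_def by (intro continuous_intros contc[OF c2] cont_preact_x)
  qed
  moreover have "(\<lambda>s. \<integral>x. G 0 x s * w x \<partial>PX) = (*) (\<integral>x. G 0 x 1 * w x \<partial>PX)"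
    by (auto simp: fun_eq_iff G_def mult_ac)
  ultimately have "((\<lambda>t. \<integral>x. g t x * w x \<partial>PX) has_real_derivative (\<integral>x. G 0 x 1 * w x \<partial>PX)) (at 0)"
    by (simp add: has_field_derivative_def)
  then have "deriv (\<lambda>t. \<integral>x. g t x * w x \<partial>PX) 0 = (\<integral>x. G 0 x 1 * w x \<partial>PX)" by (rule DERIV_imp_deriv)
  moreover have "pdiff (pdiff (Jhat \<psi> PX K m) d1) d2 \<theta> = deriv (\<lambda>t. \<integral>x. g t x * w x \<partial>PX) 0"
    unfolding pdiff_def[of "pdiff (Jhat \<psi> PX K m) d1"] using line by (simp add: pdiff_def)
  ultimately show ?thesis by (simp add: G_def w_def mult_ac)
qed

end


definition mmono :: "real ^ 'i::finite \<Rightarrow> ('i \<Rightarrow> nat) \<Rightarrow> real" where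
  "mmono x \<alpha> = (\<Prod>i\<in>UNIV. (x $ i) ^ \<alpha> i)"

lemma finite_mono_idx: "finite (mono_idx d :: ('i::finite \<Rightarrow> nat) set)"
proof -
  have "mono_idx d \<subseteq> PiE (UNIV :: 'i set) (\<lambda>_. {..d})"
  proof
    fix \<alpha> :: "'i \<Rightarrow> nat" assume "\<alpha> \<in> mono_idx d"
    then have "sum \<alpha> UNIV \<le> d" by (simp add: mono_idx_def)
    moreover have "\<alpha> i \<le> sum \<alpha> UNIV" for i by (rule member_le_sum) auto
    ultimately show "\<alpha> \<in> PiE UNIV (\<lambda>_. {..d})" by (auto simp: PiE_def extensional_def intro: le_trans)
  qed
  moreover have "finite (PiE (UNIV :: 'i set) (\<lambda>_. {..d}))" by (intro finite_PiE) auto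
  ultimately show ?thesis by (rule finite_subset)
qed

lemma mpoly_add: "mpoly_eval d (\<lambda>\<alpha>. f \<alpha> + g \<alpha>) x = mpoly_eval d f x + mpoly_eval d g x"
  by (simp add: mpoly_eval_def algebra_simps sum.distrib)

lemma mpoly_cmult: "mpoly_eval d (\<lambda>\<alpha>. c * f \<alpha>) x = c * mpoly_eval d f x"
  by (simp add: mpoly_eval_def sum_distrib_left mult_ac)

lemma mpoly_sum: "finite T \<Longrightarrow> mpoly_eval d (\<lambda>\<alpha>. \<Sum>t\<in>T. f t \<alpha>) x = (\<Sum>t\<in>T. mpoly_eval d (f t) x)"
  by (simp add: mpoly_eval_def sum_distrib_right sum.swap[of _ T])

lemma mpoly_delta:
  assumes "\<beta> \<in> mono_idx d"
  shows "mpoly_eval d (\<lambda>\<alpha>. if \<alpha> = \<beta> then 1 else 0) x = mmono x \<beta>"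
proof -
  have "mpoly_eval d (\<lambda>\<alpha>. if \<alpha> = \<beta> then 1 else 0) x = (\<Sum>\<alpha>\<in>mono_idx d. if \<alpha> = \<beta> then mmono x \<alpha> else 0)"
    unfolding mpoly_eval_def mmono_def by (intro sum.cong) auto
  also have "\<dots> = mmono x \<beta>" using sum.delta[OF finite_mono_idx[of d], of \<beta> "mmono x"] assms by simp
  finally show ?thesis .
qed

lemma mpoly_const: "mpoly_eval 0 a x = a (\<lambda>_. 0)"
proof -
  have "mono_idx 0 = {\<lambda>_::'a. 0::nat}" by (auto simp: mono_idx_def fun_eq_iff)
  then show ?thesis by (simp add: mpoly_eval_def)
qed

lemma mmono_0: "mmono x (\<lambda>_. 0) = 1" by (simp add: mmono_def)

lemma mmono_d: "mmono x (delta1 i) = x $ i"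
proof -
  have "mmono x (delta1 i) = (\<Prod>i'\<in>UNIV. if i' = i then x $ i else 1)"
    unfolding mmono_def delta1_def by (intro prod.cong) auto
  then show ?thesis by simp
qed

lemma mmono_dd: "mmono x (\<lambda>l. delta1 i l + delta1 k l) = x $ i * x $ k"
proof -
  have "mmono x (\<lambda>l. delta1 i l + delta1 k l) = (\<Prod>l\<in>UNIV. x $ l ^ delta1 i l * x $ l ^ delta1 k l)"
    unfolding mmono_def by (simp add: power_add)
  also have "\<dots> = mmono x (delta1 i) * mmono x (delta1 k)"
    unfolding mmono_def by (simp add: prod.distrib)
  finally show ?thesis by (simp add: mmono_d)
qed

lemma sum_delta1: "sum (delta1 i) (UNIV :: 'i::finite set) = 1"
  by (simp add: delta1_def)

lemma mi_0: "(\<lambda>_. 0) \<in> mono_idx d" by (simp add: mono_idx_def)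
lemma mi_d: "d \<ge> 1 \<Longrightarrow> delta1 (i::'i::finite) \<in> mono_idx d" by (simp add: mono_idx_def sum_delta1)
lemma mi_dd: "d \<ge> 2 \<Longrightarrow> (\<lambda>l. delta1 i l + delta1 k l) \<in> mono_idx d"
  by (simp add: mono_idx_def sum.distrib sum_delta1 del: delta1_def)

lemma d_ne0: "delta1 i \<noteq> (\<lambda>_. 0::nat)" by (auto simp: delta1_def fun_eq_iff)
lemma d_inj: "delta1 i = delta1 i' \<longleftrightarrow> i = i'" by (auto simp: delta1_def fun_eq_iff)
lemma dd_ne0: "(\<lambda>l. delta1 i l + delta1 k l) \<noteq> (\<lambda>_. 0::nat)" by (auto simp: delta1_def fun_eq_iff)
lemma dd_ne_d: "(\<lambda>l. delta1 i l + delta1 k l) \<noteq> delta1 (i'::'i::finite)"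
proof
  assume "(\<lambda>l. delta1 i l + delta1 k l) = delta1 i'"
  then have "sum (\<lambda>l. delta1 i l + delta1 k l) UNIV = sum (delta1 i') (UNIV :: 'i set)" by (rule arg_cong)
  then show False by (simp add: sum.distrib sum_delta1 del: delta1_def)
qed

lemma dd_inj:
  fixes i k i' k' :: "'i::{finite,linorder}"
  assumes "i \<le> k" "i' \<le> k'" "(\<lambda>l. delta1 i l + delta1 k l) = (\<lambda>l. delta1 i' l + delta1 k' l)"
  shows "i = i' \<and> k = k'"
proof -
  have e: "delta1 i l + delta1 k l = delta1 i' l + delta1 k' l" for l using assms(3) by meson
  have a: "i = i' \<or> i = k'" using e[of i] by (auto simp: delta1_def split: if_split_asm)
  have b: "k = i' \<or> k = k'" using e[of k] by (auto simp: delta1_def split: if_split_asm)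
  have c: "i' = i \<or> i' = k" using e[of i'] by (auto simp: delta1_def split: if_split_asm)
  show ?thesis
  proof (cases "i = k")
    case True
    then have "delta1 i' i + delta1 k' i = 2" using e[of i] by (simp add: delta1_def)
    then have "i' = i \<and> k' = i" by (auto simp: delta1_def split: if_split_asm)
    then show ?thesis using True by simp
  next
    case False
    show ?thesis
    proof (cases "i = i'")
      case True
      then have "k = k'" using b False by auto
      then show ?thesis using True by simp
    next
      case ne: False
      then have "i = k'" "i' = k" using a c by auto
      then have "k \<le> i" using assms(2) by simp
      then show ?thesis using assms(1) False by simp
    qed
  qed
qed


lemma gindex_sum:
  fixes F :: "(('i::{finite,linorder}, 'j::finite) param, 'i, 'j) gidx \<Rightarrow> real"
  shows "sum F gindex = (\<Sum>e\<in>Basis. F (G1 e)) + (\<Sum>j\<in>UNIV. F (Gbb j)) +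
     (\<Sum>j\<in>UNIV. \<Sum>i\<in>UNIV. F (Gbw j i)) + (\<Sum>j\<in>UNIV. \<Sum>p\<in>{p. fst p \<le> snd p}. F (Gww j (fst p) (snd p)))"
proof -
  define A1 where "A1 = (G1 ` Basis :: (('i,'j) param, 'i, 'j) gidx set)"
  define A2 where "A2 = range (Gbb :: 'j \<Rightarrow> (('i,'j) param, 'i, 'j) gidx)"
  define A3 where "A3 = ((\<lambda>(j, i). Gbw j i) ` (UNIV \<times> UNIV) :: (('i,'j) param, 'i, 'j) gidx set)"
  define A4 where "A4 = ((\<lambda>(j, p). Gww j (fst p) (snd p)) ` (UNIV \<times> {p::'i\<times>'i. fst p \<le> snd p})
     :: (('i,'j) param, 'i, 'j) gidx set)"
  have g: "gindex = A1 \<union> A2 \<union> A3 \<union> A4"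
  proof -
    have "({Gww j i k | j i k. i \<le> k} :: (('i,'j) param, 'i, 'j) gidx set) = A4"
    proof (rule set_eqI, rule iffI)
      fix z :: "(('i,'j) param, 'i, 'j) gidx" assume "z \<in> {Gww j i k | j i k. i \<le> k}"
      then obtain j i k where "z = Gww j i k" "i \<le> k" by blast
      then show "z \<in> A4" unfolding A4_def by (auto intro!: image_eqI[where x = "(j, (i, k))"])
    qed (auto simp: A4_def)
    moreover have "({Gbw j i | j i. True} :: (('i,'j) param, 'i, 'j) gidx set) = A3" by (auto simp: A3_def)
    ultimately show ?thesis unfolding gindex_def A1_def A2_def by auto
  qed
  have fin: "finite A1" "finite A2" "finite A3" "finite A4"
    unfolding A1_def A2_def A3_def A4_def by auto
  have "sum F gindex = sum F A1 + sum F A2 + sum F A3 + sum F A4"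
    unfolding g using fin
    by (subst sum.union_disjoint, (auto simp: A1_def A2_def A3_def A4_def)[3])+ simp
  moreover have "sum F A1 = (\<Sum>e\<in>Basis. F (G1 e))"
    unfolding A1_def by (subst sum.reindex) (auto simp: inj_on_def)
  moreover have "sum F A2 = (\<Sum>j\<in>UNIV. F (Gbb j))"
    unfolding A2_def by (subst sum.reindex) (auto simp: inj_on_def)
  moreover have "sum F A3 = (\<Sum>j\<in>UNIV. \<Sum>i\<in>UNIV. F (Gbw j i))"
    unfolding A3_def by (subst sum.reindex) (auto simp: inj_on_def sum.cartesian_product split_beta)
  moreover have "sum F A4 = (\<Sum>j\<in>UNIV. \<Sum>p\<in>{p. fst p \<le> snd p}. F (Gww j (fst p) (snd p)))"
    unfolding A4_def by (subst sum.reindex) (auto simp: inj_on_def sum.cartesian_product prod_eq_iff split_beta)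
  ultimately show ?thesis by simp
qed


definition phi :: "(real \<Rightarrow> real) \<Rightarrow> ('i::{finite,linorder}, 'j::finite) param \<Rightarrow> (('i::{finite,linorder}, 'j::finite) param, 'i::{finite,linorder}, 'j::finite) gidx \<Rightarrow> real ^ 'i::{finite,linorder} \<Rightarrow> real" where
  "phi \<psi> \<theta> idx x = (case idx of
       G1 e \<Rightarrow> -2 * Gresp \<psi> \<theta> x e
     | Gbb j \<Rightarrow> deriv (deriv \<psi>) (preact \<theta> x j) * preact (dir_b j) x j * preact (dir_b j) x j * pv \<theta> $ j
     | Gbw j i \<Rightarrow> deriv (deriv \<psi>) (preact \<theta> x j) * preact (dir_b j) x j * preact (dir_w i j) x j * pv \<theta> $ j
     | Gww j i k \<Rightarrow> deriv (deriv \<psi>) (preact \<theta> x j) * preact (dir_w i j) x j * preact (dir_w k j) x j * pv \<theta> $ j)"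

definition dd :: "'i \<Rightarrow> 'i \<Rightarrow> 'i \<Rightarrow> nat" where "dd i k = (\<lambda>l. delta1 i l + delta1 k l)"

lemma d_ne0': "(\<lambda>_. 0::nat) \<noteq> delta1 i" using d_ne0 by metis
lemma dd_ne0': "(\<lambda>_. 0::nat) \<noteq> dd i k" using dd_ne0 unfolding dd_def by metis
lemma dd_ne_d': "delta1 i' \<noteq> dd i (k::'i::finite)" using dd_ne_d unfolding dd_def by metis

lemma eff_zero:
  fixes \<theta> :: "('i::{finite,linorder}, 'j::finite) param" and c :: "(('i, 'j) param, 'i, 'j) gidx \<Rightarrow> real"
  assumes eff: "poly_efficient \<psi> X 0 [0, 1, 2] \<theta>"
    and lin: "\<And>x. linear (Gresp \<psi> \<theta> x)"
    and zero: "\<forall>x\<in>X. (\<Sum>a\<in>gindex. c a * phi \<psi> \<theta> a x) = 0"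
  shows "\<forall>a\<in>gindex. c a = 0"
proof -
  have v0: "\<And>k. pv \<theta> $ k \<noteq> 0" using eff by (simp add: poly_efficient_def)
  define h where "h = (\<Sum>e\<in>Basis. c (G1 e) *\<^sub>R e)"
  define P where "P = {p :: 'i \<times> 'i. fst p \<le> snd p}"
  have finP: "finite P" by simp
  define a0 where "a0 = (\<lambda>\<alpha>::'i \<Rightarrow> nat. -2 * pc h)"
  define A where "A j k \<alpha> = (if k = 0 then -2 * pv h $ j
      else if k = 1 then (-2 * pv \<theta> $ j) * (pb h $ j * (if \<alpha> = (\<lambda>_. 0) then 1 else 0)
           + (\<Sum>i\<in>UNIV. pW h $ i $ j * (if \<alpha> = delta1 i then 1 else 0)))
      else pv \<theta> $ j * (c (Gbb j) * (if \<alpha> = (\<lambda>_. 0) then 1 else 0)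
           + (\<Sum>i\<in>UNIV. c (Gbw j i) * (if \<alpha> = delta1 i then 1 else 0))
           + (\<Sum>p\<in>P. c (Gww j (fst p) (snd p)) * (if \<alpha> = dd (fst p) (snd p) then 1 else 0))))"
    for j and k :: nat and \<alpha> :: "'i \<Rightarrow> nat"
  have E0: "mpoly_eval 0 a0 x = -2 * pc h" for x by (simp add: mpoly_const a0_def)
  have E1: "mpoly_eval 0 (A j 0) x = -2 * pv h $ j" for j x by (simp add: mpoly_const A_def)
  have m1: "delta1 i \<in> mono_idx 1" for i :: 'i by (rule mi_d) simp
  have m2: "delta1 i \<in> mono_idx 2" for i :: 'i by (rule mi_d) simp
  have m22: "dd i k \<in> mono_idx 2" for i k :: 'i unfolding dd_def by (rule mi_dd) simp
  have E2: "mpoly_eval 1 (A j 1) x = -2 * pv \<theta> $ j * preact h x j" for j x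
  proof -
    have "A j 1 = (\<lambda>\<alpha>. (-2 * pv \<theta> $ j) * (pb h $ j * (if \<alpha> = (\<lambda>_. 0) then 1 else 0)
           + (\<Sum>i\<in>UNIV. pW h $ i $ j * (if \<alpha> = delta1 i then 1 else 0))))"
      by (simp add: A_def fun_eq_iff)
    then have "mpoly_eval 1 (A j 1) x = (-2 * pv \<theta> $ j) * (pb h $ j * mmono x (\<lambda>_. 0) + (\<Sum>i\<in>UNIV. pW h $ i $ j * mmono x (delta1 i)))"
      by (simp only: mpoly_cmult mpoly_add mpoly_sum[OF finite_class.finite_UNIV] mpoly_delta mi_0 m1)
    then show ?thesis by (simp add: preact_def mult_ac mmono_0 mmono_d del: delta1_def)
  qed
  have E3: "mpoly_eval 2 (A j 2) x = pv \<theta> $ j * (c (Gbb j) + (\<Sum>i\<in>UNIV. c (Gbw j i) * x $ i)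
      + (\<Sum>p\<in>P. c (Gww j (fst p) (snd p)) * (x $ fst p * x $ snd p)))" for j x
  proof -
    have "A j 2 = (\<lambda>\<alpha>. pv \<theta> $ j * (c (Gbb j) * (if \<alpha> = (\<lambda>_. 0) then 1 else 0)
           + (\<Sum>i\<in>UNIV. c (Gbw j i) * (if \<alpha> = delta1 i then 1 else 0))
           + (\<Sum>p\<in>P. c (Gww j (fst p) (snd p)) * (if \<alpha> = dd (fst p) (snd p) then 1 else 0))))"
      by (simp add: A_def fun_eq_iff)
    then have "mpoly_eval 2 (A j 2) x = pv \<theta> $ j * (c (Gbb j) * mmono x (\<lambda>_. 0)
           + (\<Sum>i\<in>UNIV. c (Gbw j i) * mmono x (delta1 i))
           + (\<Sum>p\<in>P. c (Gww j (fst p) (snd p)) * mmono x (dd (fst p) (snd p))))"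
      by (simp only: mpoly_cmult mpoly_add mpoly_sum[OF finite_class.finite_UNIV] mpoly_sum[OF finP] mpoly_delta mi_0 m2 m22)
    then show ?thesis by (simp add: mmono_0 mmono_d mmono_dd dd_def del: delta1_def)
  qed
  have Gh: "Gresp \<psi> \<theta> x h = (\<Sum>e\<in>Basis. c (G1 e) * Gresp \<psi> \<theta> x e)" for x
    unfolding h_def using lin[of x] by (simp add: linear_sum linear_scale)
  have key: "mpoly_eval 0 a0 x + (\<Sum>j\<in>UNIV. \<Sum>k<length [0::nat, 1, 2].
        mpoly_eval ([0, 1, 2] ! k) (A j k) x * (deriv ^^ k) \<psi> (preact \<theta> x j))
      = (\<Sum>a\<in>gindex. c a * phi \<psi> \<theta> a x)" for x
  proof -
    have l3: "{..<length [0::nat, 1, 2]} = {0, 1, 2}" by auto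
    have sum3: "(\<Sum>k\<in>{0,1,2::nat}. F k) = F 0 + F 1 + F 2" for F :: "nat \<Rightarrow> real" by simp
    have n0: "[0::nat, 1, 2] ! 0 = 0" and n1: "[0::nat, 1, 2] ! 1 = 1" and n2: "[0::nat, 1, 2] ! 2 = 2"
      by (simp_all add: numeral_2_eq_2)
    have f0: "(deriv ^^ 0) \<psi> = \<psi>" and f1: "(deriv ^^ 1) \<psi> = deriv \<psi>"
      and f2: "(deriv ^^ 2) \<psi> = deriv (deriv \<psi>)"
      by (simp_all add: numeral_2_eq_2)
    have "mpoly_eval 0 a0 x + (\<Sum>j\<in>UNIV. \<Sum>k<length [0::nat, 1, 2].
        mpoly_eval ([0, 1, 2] ! k) (A j k) x * (deriv ^^ k) \<psi> (preact \<theta> x j))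
      = -2 * pc h + (\<Sum>j\<in>UNIV. -2 * pv h $ j * \<psi> (preact \<theta> x j)
          + -2 * pv \<theta> $ j * preact h x j * deriv \<psi> (preact \<theta> x j)
          + pv \<theta> $ j * (c (Gbb j) + (\<Sum>i\<in>UNIV. c (Gbw j i) * x $ i)
             + (\<Sum>p\<in>P. c (Gww j (fst p) (snd p)) * (x $ fst p * x $ snd p))) * deriv (deriv \<psi>) (preact \<theta> x j))"
      unfolding l3 sum3 n0 n1 n2 f0 f1 f2 E0 E1 E2 E3 ..
    also have "\<dots> = (\<Sum>e\<in>Basis. c (G1 e) * phi \<psi> \<theta> (G1 e) x) + (\<Sum>j\<in>UNIV. c (Gbb j) * phi \<psi> \<theta> (Gbb j) x) +
     (\<Sum>j\<in>UNIV. \<Sum>i\<in>UNIV. c (Gbw j i) * phi \<psi> \<theta> (Gbw j i) x) +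
     (\<Sum>j\<in>UNIV. \<Sum>p\<in>P. c (Gww j (fst p) (snd p)) * phi \<psi> \<theta> (Gww j (fst p) (snd p)) x)"
    proof -
      have S1: "(\<Sum>e\<in>Basis. c (G1 e) * phi \<psi> \<theta> (G1 e) x) = -2 * pc h + (\<Sum>j\<in>UNIV. -2 * pv h $ j * \<psi> (preact \<theta> x j)
          + -2 * pv \<theta> $ j * preact h x j * deriv \<psi> (preact \<theta> x j))"
      proof -
        have "(\<Sum>e\<in>Basis. c (G1 e) * phi \<psi> \<theta> (G1 e) x) = -2 * Gresp \<psi> \<theta> x h"
          by (simp add: phi_def Gh sum_distrib_left mult_ac)
        also have "-2 * Gresp \<psi> \<theta> x h = -2 * pc h + (\<Sum>j\<in>UNIV. -2 * pv h $ j * \<psi> (preact \<theta> x j)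
          + -2 * pv \<theta> $ j * preact h x j * deriv \<psi> (preact \<theta> x j))"
          by (simp add: Gresp_def sum_distrib_left algebra_simps sum.distrib sum_subtractf sum_negf)
        finally show ?thesis .
      qed
      have S3: "(\<Sum>j\<in>UNIV. \<Sum>i\<in>UNIV. c (Gbw j i) * phi \<psi> \<theta> (Gbw j i) x)
          = (\<Sum>j\<in>UNIV. pv \<theta> $ j * (\<Sum>i\<in>UNIV. c (Gbw j i) * x $ i) * deriv (deriv \<psi>) (preact \<theta> x j))"
        by (simp add: phi_def preact_b preact_w sum_distrib_left sum_distrib_right mult_ac)
      have S4: "(\<Sum>j\<in>UNIV. \<Sum>p\<in>P. c (Gww j (fst p) (snd p)) * phi \<psi> \<theta> (Gww j (fst p) (snd p)) x)
          = (\<Sum>j\<in>UNIV. pv \<theta> $ j * (\<Sum>p\<in>P. c (Gww j (fst p) (snd p)) * (x $ fst p * x $ snd p)) * deriv (deriv \<psi>) (preact \<theta> x j))"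
        by (simp add: phi_def preact_b preact_w sum_distrib_left sum_distrib_right mult_ac)
      have S2: "(\<Sum>j\<in>UNIV. c (Gbb j) * phi \<psi> \<theta> (Gbb j) x)
          = (\<Sum>j\<in>UNIV. pv \<theta> $ j * c (Gbb j) * deriv (deriv \<psi>) (preact \<theta> x j))"
        by (simp add: phi_def preact_b mult_ac)
      have T: "(\<Sum>j\<in>UNIV. -2 * pv h $ j * \<psi> (preact \<theta> x j)
          + -2 * pv \<theta> $ j * preact h x j * deriv \<psi> (preact \<theta> x j)
          + pv \<theta> $ j * (c (Gbb j) + (\<Sum>i\<in>UNIV. c (Gbw j i) * x $ i)
             + (\<Sum>p\<in>P. c (Gww j (fst p) (snd p)) * (x $ fst p * x $ snd p))) * deriv (deriv \<psi>) (preact \<theta> x j))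
        = (\<Sum>j\<in>UNIV. (-2 * pv h $ j * \<psi> (preact \<theta> x j)
          + -2 * pv \<theta> $ j * preact h x j * deriv \<psi> (preact \<theta> x j))
          + pv \<theta> $ j * c (Gbb j) * deriv (deriv \<psi>) (preact \<theta> x j)
          + pv \<theta> $ j * (\<Sum>i\<in>UNIV. c (Gbw j i) * x $ i) * deriv (deriv \<psi>) (preact \<theta> x j)
          + pv \<theta> $ j * (\<Sum>p\<in>P. c (Gww j (fst p) (snd p)) * (x $ fst p * x $ snd p)) * deriv (deriv \<psi>) (preact \<theta> x j))"
        by (intro sum.cong refl) (simp add: algebra_simps)
      show ?thesis unfolding S1 S2 S3 S4 T by (simp only: sum.distrib add.assoc)
    qed
    also have "\<dots> = (\<Sum>a\<in>gindex. c a * phi \<psi> \<theta> a x)"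
      unfolding gindex_sum[of "\<lambda>a. c a * phi \<psi> \<theta> a x"] P_def ..
    finally show ?thesis .
  qed
  have E: "(\<forall>x\<in>X. mpoly_eval 0 a0 x + (\<Sum>j\<in>UNIV. \<Sum>k<length [0::nat, 1, 2].
        mpoly_eval ([0, 1, 2] ! k) (A j k) x * (deriv ^^ k) \<psi> (preact \<theta> x j)) = 0)
     \<longrightarrow> (\<forall>\<alpha>\<in>mono_idx 0. a0 \<alpha> = 0) \<and>
        (\<forall>j k. k < length [0::nat, 1, 2] \<longrightarrow> (\<forall>\<alpha>\<in>mono_idx ([0, 1, 2] ! k). A j k \<alpha> = 0))"
    using eff unfolding poly_efficient_def by blast
  have prem: "\<forall>x\<in>X. mpoly_eval 0 a0 x + (\<Sum>j\<in>UNIV. \<Sum>k<length [0::nat, 1, 2].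
        mpoly_eval ([0, 1, 2] ! k) (A j k) x * (deriv ^^ k) \<psi> (preact \<theta> x j)) = 0"
    using zero by (simp only: key)
  have Z0: "\<forall>\<alpha>\<in>mono_idx 0. a0 \<alpha> = 0" using E prem by blast
  have Zall: "\<And>j k \<alpha>. k < length [0::nat, 1, 2] \<Longrightarrow> \<alpha> \<in> mono_idx ([0::nat, 1, 2] ! k) \<Longrightarrow> A j k \<alpha> = 0"
    using E prem by blast
  have n1: "[0::nat, 1, 2] ! 1 = 1" and n2: "[0::nat, 1, 2] ! 2 = 2" by (simp_all add: numeral_2_eq_2)
  have Z1: "\<And>j \<alpha>. \<alpha> \<in> mono_idx 0 \<Longrightarrow> A j 0 \<alpha> = 0" using Zall[of 0] by simp
  have Z2: "\<And>j \<alpha>. \<alpha> \<in> mono_idx 1 \<Longrightarrow> A j 1 \<alpha> = 0" using Zall[of 1] n1 by simp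
  have Z3: "\<And>j \<alpha>. \<alpha> \<in> mono_idx 2 \<Longrightarrow> A j 2 \<alpha> = 0" using Zall[of 2] n2 by simp
  have pch: "pc h = 0" using Z0 mi_0[of 0] by (auto simp: a0_def)
  have pvh: "pv h $ j = 0" for j using Z1[OF mi_0, of j] by (simp add: A_def)
  have pbh: "pb h $ j = 0" for j
  proof -
    have "A j 1 (\<lambda>_. 0) = -2 * pv \<theta> $ j * pb h $ j"
      unfolding A_def using d_ne0 by (simp add: d_ne0' dd_ne0' dd_ne_d' del: delta1_def)
    then show ?thesis using Z2[OF mi_0, of j] v0[of j] by simp
  qed
  have pWh: "pW h $ i $ j = 0" for i j
  proof -
    have "(\<Sum>i'\<in>UNIV. pW h $ i' $ j * (if delta1 i = delta1 i' then 1 else 0)) = pW h $ i $ j"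
      by (subst sum.cong[OF refl, of _ _ "\<lambda>i'. if i = i' then pW h $ i $ j else 0"]) (auto simp: d_inj simp del: delta1_def)
    then have "A j 1 (delta1 i) = -2 * pv \<theta> $ j * pW h $ i $ j"
      unfolding A_def using d_ne0[of i] by (simp add: d_ne0' dd_ne0' dd_ne_d' del: delta1_def)
    then show ?thesis using Z2[OF m1[of i], of j] v0[of j] by simp
  qed
  have h0: "h = 0"
  proof -
    have "pW h = 0" using pWh by (simp add: vec_eq_iff)
    moreover have "pv h = 0" "pb h = 0" using pvh pbh by (simp_all add: vec_eq_iff)
    ultimately show ?thesis using pch by (simp add: pW_def pv_def pb_def pc_def prod_eq_iff)
  qed
  have cG1: "c (G1 e) = 0" if "e \<in> Basis" for e
  proof -
    have "h \<bullet> e = (\<Sum>e'\<in>Basis. c (G1 e') * (e' \<bullet> e))" by (simp add: h_def inner_sum_left)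
    also have "\<dots> = c (G1 e)" using that by (simp add: inner_Basis if_distrib cong: if_cong)
    finally show ?thesis using h0 by simp
  qed
  have cbb: "c (Gbb j) = 0" for j
  proof -
    have "A j 2 (\<lambda>_. 0) = pv \<theta> $ j * c (Gbb j)"
      unfolding A_def using d_ne0 by (simp add: d_ne0' dd_ne0' dd_ne_d' del: delta1_def)
    then show ?thesis using Z3[OF mi_0, of j] v0[of j] by simp
  qed
  have cbw: "c (Gbw j i) = 0" for j i
  proof -
    have "(\<Sum>i'\<in>UNIV. c (Gbw j i') * (if delta1 i = delta1 i' then 1 else 0)) = c (Gbw j i)"
      by (subst sum.cong[OF refl, of _ _ "\<lambda>i'. if i = i' then c (Gbw j i) else 0"]) (auto simp: d_inj simp del: delta1_def)
    moreover have "\<forall>p. delta1 i \<noteq> dd (fst p) (snd p)" using dd_ne_d unfolding dd_def by metis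
    ultimately have "A j 2 (delta1 i) = pv \<theta> $ j * c (Gbw j i)"
      unfolding A_def using d_ne0[of i] by (simp add: d_ne0' dd_ne0' dd_ne_d' del: delta1_def)
    then show ?thesis using Z3[OF m2[of i], of j] v0[of j] by simp
  qed
  have cww: "c (Gww j i k) = 0" if ik: "i \<le> k" for j i k
  proof -
    have "(\<Sum>p\<in>P. c (Gww j (fst p) (snd p)) * (if dd i k = dd (fst p) (snd p) then 1 else 0))
        = (\<Sum>p\<in>P. if p = (i, k) then c (Gww j i k) else 0)"
    proof (intro sum.cong refl)
      fix p assume "p \<in> P"
      then have "fst p \<le> snd p" by (simp add: P_def)
      then have "dd i k = dd (fst p) (snd p) \<longleftrightarrow> p = (i, k)"
        using dd_inj[OF ik, of "fst p" "snd p"] unfolding dd_def by (cases p) auto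
      then show "c (Gww j (fst p) (snd p)) * (if dd i k = dd (fst p) (snd p) then 1 else 0)
          = (if p = (i, k) then c (Gww j i k) else 0)" by auto
    qed
    also have "\<dots> = c (Gww j i k)" using finP ik by (simp add: P_def)
    finally have s3: "(\<Sum>p\<in>P. c (Gww j (fst p) (snd p)) * (if dd i k = dd (fst p) (snd p) then 1 else 0))
        = c (Gww j i k)" .
    have "dd i k \<noteq> delta1 i'" for i' using dd_ne_d unfolding dd_def by metis
    moreover have "dd i k \<noteq> (\<lambda>_. 0)" using dd_ne0 unfolding dd_def by metis
    ultimately have "A j 2 (dd i k) = pv \<theta> $ j * c (Gww j i k)"
      unfolding A_def using s3 by (simp add: d_ne0' dd_ne0' dd_ne_d' del: delta1_def)
    then show ?thesis using Z3[OF m22[of i k], of j] v0[of j] by simp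
  qed
  show ?thesis unfolding gindex_def using cG1 cbb cbw cww by auto
qed


lemma gradient_eq:
  fixes f :: "'a::euclidean_space \<Rightarrow> real"
  assumes df: "(f has_derivative F) (at x)" and e: "e \<in> Basis"
  shows "gradient f x \<bullet> e = F e"
proof -
  define D where "D = (\<Sum>b\<in>Basis. F b *\<^sub>R b)"
  have lin: "linear F" using df by (rule has_derivative_linear)
  have FD: "F = (\<lambda>h. h \<bullet> D)"
  proof
    fix h
    have "F h = (\<Sum>b\<in>Basis. (h \<bullet> b) * F b)" by (rule linear_repr[OF lin])
    also have "\<dots> = h \<bullet> D" by (simp add: D_def inner_sum_right mult.commute)
    finally show "F h = h \<bullet> D" .
  qed
  have g: "GDERIV f x :> D" unfolding gderiv_def using df FD by simp
  have "gradient f x = D"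
    unfolding gradient_def
  proof (rule the_equality[where P = "\<lambda>D. GDERIV f x :> D", OF g])
    fix D' assume "GDERIV f x :> D'"
    then have "(\<lambda>h. h \<bullet> D') = (\<lambda>h. h \<bullet> D)"
      using g unfolding gderiv_def by (rule has_derivative_unique)
    then have "(D' - D) \<bullet> D' = (D' - D) \<bullet> D" by meson
    then have "(D' - D) \<bullet> (D' - D) = 0" by (simp add: inner_diff_right)
    then show "D' = D" by simp
  qed
  then show ?thesis using e by (simp add: D_def inner_sum_left inner_Basis if_distrib cong: if_cong)
qed

lemma cont_resp_x:
  assumes c0: "continuous_on UNIV \<psi>"
  shows "continuous_on UNIV (\<lambda>x. resp \<psi> k x)"
proof -
  have "continuous_on UNIV (\<lambda>x. (k, x))" by (intro continuous_intros)
  from continuous_on_compose2[OF cont_resp[OF c0] this] show ?thesis by simp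
qed

context kern
begin

lemma Jcost_eq:
  assumes c0: "continuous_on UNIV \<psi>" and S: "compact S" "AE x in PX. x \<in> S"
  shows "Jcost \<psi> PX K R m k = (\<integral>x. (resp \<psi> k x)\<^sup>2 \<partial>PX) - 2 * Jhat \<psi> PX K m k + (\<integral>x. Y2 x \<partial>PX) + R k"
proof -
  interpret prob_space PX by (rule PX_prob)
  define r where "r x = resp \<psi> k x" for x
  have cr: "continuous_on UNIV r" unfolding r_def by (rule cont_resp_x[OF c0])
  have mr[measurable]: "r \<in> borel_measurable PX"
    using borel_measurable_continuous_onI[OF cr] measurable_cong_sets[OF PX_borel refl] by blast
  have [measurable]: "target K m \<in> borel_measurable PX" "Y2 \<in> borel_measurable PX"
    by (rule target_meas, rule Y2_meas)
  have [measurable]: "Measurable.pred PX (\<lambda>x. integrable (K (m, x)) (\<lambda>y. y\<^sup>2))" by (rule intK_pred)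
  have i1: "integrable PX (\<lambda>x. (r x)\<^sup>2)"
    using int_cont_mult[of "\<lambda>x. (r x)\<^sup>2" S PX "\<lambda>_. 1"] cr S PX_borel
    by (simp add: continuous_intros)
  have i2: "integrable PX (\<lambda>x. r x * target K m x)"
    by (rule int_cont_mult[OF cr S target_int PX_borel])
  have "(\<integral>x. (\<integral>y. (resp \<psi> k x - y)\<^sup>2 \<partial>K (m, x)) \<partial>PX)
      = (\<integral>x. (if integrable (K (m, x)) (\<lambda>y. y\<^sup>2) then (r x)\<^sup>2 - 2 * r x * target K m x + Y2 x else 0) \<partial>PX)"
    unfolding r_def by (simp add: inner_expand)
  also have "\<dots> = (\<integral>x. (r x)\<^sup>2 - 2 * r x * target K m x + Y2 x \<partial>PX)"
  proof (rule integral_cong_AE)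
    show "(\<lambda>x. if integrable (K (m, x)) (\<lambda>y. y\<^sup>2) then (r x)\<^sup>2 - 2 * r x * target K m x + Y2 x else 0)
       \<in> borel_measurable PX" by measurable
    show "(\<lambda>x. (r x)\<^sup>2 - 2 * r x * target K m x + Y2 x) \<in> borel_measurable PX" by measurable
    show "AE x in PX. (if integrable (K (m, x)) (\<lambda>y. y\<^sup>2) then (r x)\<^sup>2 - 2 * r x * target K m x + Y2 x else 0)
       = (r x)\<^sup>2 - 2 * r x * target K m x + Y2 x"
      using AE_int by eventually_elim simp
  qed
  also have "\<dots> = (\<integral>x. (r x)\<^sup>2 \<partial>PX) - 2 * (\<integral>x. r x * target K m x \<partial>PX) + (\<integral>x. Y2 x \<partial>PX)"
    using i1 i2 Y2_int by (simp add: mult.assoc)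
  finally have "(\<integral>x. (\<integral>y. (resp \<psi> k x - y)\<^sup>2 \<partial>K (m, x)) \<partial>PX)
     = (\<integral>x. (resp \<psi> k x)\<^sup>2 \<partial>PX) - 2 * (\<integral>x. resp \<psi> k x * target K m x \<partial>PX) + (\<integral>x. Y2 x \<partial>PX)"
    unfolding r_def .
  then show ?thesis unfolding Jcost_def Jhat_def by simp
qed

end

lemma goodrv_cong:
  assumes eq: "\<And>\<omega>. \<omega> \<in> space P \<Longrightarrow> X \<omega> = Y \<omega>" and g: "goodrv P X"
  shows "goodrv P Y"
proof -
  have "Y \<in> borel_measurable P" using g eq measurable_cong[of P X Y] by (simp add: goodrv_def)
  moreover have "integrable P Y" using g eq Bochner_Integration.integrable_cong[of P P X Y] by (simp add: goodrv_def)
  moreover have "integrable P (\<lambda>\<omega>. (Y \<omega>)\<^sup>2)"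
    using g eq Bochner_Integration.integrable_cong[of P P "\<lambda>\<omega>. (X \<omega>)\<^sup>2" "\<lambda>\<omega>. (Y \<omega>)\<^sup>2"]
    by (simp add: goodrv_def)
  ultimately show ?thesis by (simp add: goodrv_def)
qed

lemma finite_gindex: "finite (gindex :: (('i::{finite,linorder}, 'j::finite) param, 'i, 'j) gidx set)"
proof -
  have hw: "(Gww j i k :: (('i, 'j) param, 'i, 'j) gidx) \<in> range (\<lambda>(j, i, k). Gww j i k)" for j i k
    by (rule range_eqI[where x = "(j, i, k)"]) simp
  have hb: "(Gbw j i :: (('i, 'j) param, 'i, 'j) gidx) \<in> range (\<lambda>(j, i). Gbw j i)" for j i
    by (rule range_eqI[where x = "(j, i)"]) simp
  have "(gindex :: (('i, 'j) param, 'i, 'j) gidx set) \<subseteq> G1 ` Basis \<union> range Gbb \<union> range (\<lambda>(j, i). Gbw j i) \<union> range (\<lambda>(j, i, k). Gww j i k)"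
    unfolding gindex_def using hw hb by auto
  moreover have "finite (G1 ` Basis \<union> range Gbb \<union> range (\<lambda>(j, i). Gbw j i) \<union> range (\<lambda>(j, i, k). Gww j i k)
     :: (('i, 'j) param, 'i, 'j) gidx set)" by simp
  ultimately show ?thesis by (rule finite_subset)
qed


lemma cont_preact_x1: "continuous_on UNIV (\<lambda>x. preact d x j)"
  unfolding preact_def by (intro continuous_intros)

lemma cont_phi:
  assumes c0: "continuous_on UNIV \<psi>" and c1: "continuous_on UNIV (deriv \<psi>)"
    and c2: "continuous_on UNIV (deriv (deriv \<psi>))"
  shows "continuous_on UNIV (phi \<psi> \<theta> a)"
proof (cases a)
  case (G1 e)
  have "phi \<psi> \<theta> a = (\<lambda>x. -2 * Gresp \<psi> \<theta> x e)" by (simp add: G1 phi_def fun_eq_iff)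
  moreover have "continuous_on UNIV (\<lambda>x. Gresp \<psi> \<theta> x e)"
  proof -
    have "continuous_on UNIV (\<lambda>x. (\<theta>, x))" by (intro continuous_intros)
    from continuous_on_compose2[OF cont_Gresp[OF c0 c1] this] show ?thesis by simp
  qed
  ultimately show ?thesis by (simp add: continuous_intros)
next
  case (Gbb j) then show ?thesis
    unfolding phi_def by (simp, intro continuous_intros contc[OF c2] cont_preact_x1)
next
  case (Gbw j i) then show ?thesis
    unfolding phi_def by (simp, intro continuous_intros contc[OF c2] cont_preact_x1)
next
  case (Gww j i k) then show ?thesis
    unfolding phi_def by (simp, intro continuous_intros contc[OF c2] cont_preact_x1)
qed


theorem proposition2p5:
  fixes \<psi> :: "real \<Rightarrow> real"
    and PX :: "(real ^ 'i::{finite,linorder}) measure"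
    and MM :: "'m measure"
    and K :: "'m \<times> (real ^ 'i::{finite,linorder}) \<Rightarrow> real measure"
    and R :: "('i::{finite,linorder}, 'j::finite) param \<Rightarrow> real"
    and P :: "'w measure"
    and M :: "'w \<Rightarrow> 'm"
    and \<theta> :: "('i::{finite,linorder}, 'j::finite) param"
  assumes psi_analytic: "real_analytic_on \<psi> UNIV"
    and PX_prob: "prob_space PX" and PX_borel: "sets PX = sets borel"
    and X_compact: "compact (msupport PX)"
    and K_kernel: "K \<in> measurable (MM \<Otimes>\<^sub>M borel) (prob_algebra borel)"
    and Y_sq: "\<forall>m\<in>space MM. (\<integral>\<^sup>+x. (\<integral>\<^sup>+y. ennreal (y\<^sup>2) \<partial>K (m, x)) \<partial>PX) < \<infinity>"
    and R_analytic: "real_analytic_on R UNIV" and R_convex: "convex_on UNIV R"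
    and P_prob: "prob_space P"
    and M_rv: "M \<in> measurable P MM"
    and M_gauss: "\<forall>\<phi>. continuous_on UNIV \<phi> \<longrightarrow> (\<exists>x\<in>msupport PX. \<phi> x \<noteq> 0) \<longrightarrow>
        (\<exists>\<mu> \<sigma>. \<sigma> > 0 \<and>
           distributed P lborel (\<lambda>\<omega>. \<integral>x. \<phi> x * target K (M \<omega>) x \<partial>PX) (normal_density \<mu> \<sigma>))"
    and eff: "poly_efficient \<psi> (msupport PX) 0 [0, 1, 2] \<theta>"
  shows "full_rank_on gindex
           (cov_matrix P (\<lambda>\<omega>. gvec \<psi> PX K R (M \<omega>) \<theta>))"
proof -
  define S where "S = msupport PX"
  have AES: "AE x in PX. x \<in> S" unfolding S_def by (rule support_AE[OF PX_borel])
  have cS: "compact S" using X_compact by (simp add: S_def)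
  have dk: "\<And>k t. ((deriv ^^ k) \<psi> has_real_derivative (deriv ^^ Suc k) \<psi> t) (at t)"
    using analytic_1d_deriv[OF psi_analytic] .
  have d\<psi>0: "\<And>t. (\<psi> has_real_derivative deriv \<psi> t) (at t)" using dk[of 0] by simp
  have d\<psi>1: "\<And>t. (deriv \<psi> has_real_derivative deriv (deriv \<psi>) t) (at t)" using dk[of 1] by simp
  have d\<psi>2: "\<And>t. (deriv (deriv \<psi>) has_real_derivative deriv (deriv (deriv \<psi>)) t) (at t)"
    using dk[of 2] by (simp add: numeral_2_eq_2)
  have c0: "continuous_on UNIV \<psi>"
    using d\<psi>0 by (meson DERIV_isCont continuous_at_imp_continuous_on)
  have c1: "continuous_on UNIV (deriv \<psi>)"
    using d\<psi>1 by (meson DERIV_isCont continuous_at_imp_continuous_on)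
  have c2: "continuous_on UNIV (deriv (deriv \<psi>))"
    using d\<psi>2 by (meson DERIV_isCont continuous_at_imp_continuous_on)
  obtain DR where DR: "(R has_derivative DR) (at \<theta>)"
    using analytic_differentiable[OF R_analytic] by blast
  obtain DQ where DQ: "((\<lambda>k. \<integral>x. (resp \<psi> k x)\<^sup>2 \<partial>PX) has_derivative DQ) (at \<theta>)"
    using Q_deriv[OF d\<psi>0 c0 c1 cS AES PX_prob PX_borel] by blast
  have kernm: "kern PX MM K m" if "m \<in> space MM" for m
    using that PX_prob PX_borel K_kernel Y_sq by (simp add: kern_def)
  have Mspace: "M \<omega> \<in> space MM" if "\<omega> \<in> space P" for \<omega>
    using M_rv that by (rule measurable_space)
  define T where "T = (\<lambda>\<phi> \<omega>. \<integral>x. \<phi> x * target K (M \<omega>) x \<partial>PX)"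
  define A where "A = (\<lambda>a::(('i, 'j) param, 'i, 'j) gidx. case a of G1 e \<Rightarrow> DQ e + DR e | _ \<Rightarrow> 0)"
  have Zeq: "gvec \<psi> PX K R (M \<omega>) \<theta> a = A a + T (phi \<psi> \<theta> a) \<omega>"
    if \<omega>: "\<omega> \<in> space P" and a: "a \<in> gindex" for \<omega> a
  proof -
    interpret kern PX MM K "M \<omega>" by (rule kernm[OF Mspace[OF \<omega>]])
    show ?thesis
    proof (cases a)
      case (G1 e)
      then have e: "e \<in> Basis" using a by (auto simp: gindex_def)
      have DJ: "(Jhat \<psi> PX K (M \<omega>) has_derivative (\<lambda>h. \<integral>x. Gresp \<psi> \<theta> x h * target K (M \<omega>) x \<partial>PX)) (at \<theta>)"
        by (rule Jhat_deriv[OF d\<psi>0 c0 c1 cS AES])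
      have Jeq: "Jcost \<psi> PX K R (M \<omega>) = (\<lambda>k. (\<integral>x. (resp \<psi> k x)\<^sup>2 \<partial>PX) - 2 * Jhat \<psi> PX K (M \<omega>) k
          + (\<integral>x. Y2 x \<partial>PX) + R k)"
        by (intro ext) (rule Jcost_eq[OF c0 cS AES])
      have "(Jcost \<psi> PX K R (M \<omega>) has_derivative
          (\<lambda>h. DQ h - 2 * (\<integral>x. Gresp \<psi> \<theta> x h * target K (M \<omega>) x \<partial>PX) + 0 + DR h)) (at \<theta>)"
        unfolding Jeq
        by (intro has_derivative_add has_derivative_diff has_derivative_mult_right DQ DJ DR has_derivative_const)
      then have "gradient (Jcost \<psi> PX K R (M \<omega>)) \<theta> \<bullet> e
          = DQ e - 2 * (\<integral>x. Gresp \<psi> \<theta> x e * target K (M \<omega>) x \<partial>PX) + 0 + DR e"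
        by (rule gradient_eq[OF _ e])
      moreover have "T (phi \<psi> \<theta> a) \<omega> = -2 * (\<integral>x. Gresp \<psi> \<theta> x e * target K (M \<omega>) x \<partial>PX)"
        by (simp add: T_def phi_def G1 mult.assoc)
      ultimately show ?thesis by (simp add: gvec_def A_def G1)
    next
      case (Gbb j)
      have "gvec \<psi> PX K R (M \<omega>) \<theta> a = pdiff (pdiff (Jhat \<psi> PX K (M \<omega>)) (dir_b j)) (dir_b j) \<theta>"
        by (simp add: gvec_def Gbb)
      also have "\<dots> = T (phi \<psi> \<theta> a) \<omega>"
        unfolding Jhat_second[OF d\<psi>0 d\<psi>1 c0 c1 c2 cS AES dirlike_b dirlike_b]
        by (simp add: T_def phi_def Gbb)
      finally show ?thesis by (simp add: A_def Gbb)
    next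
      case (Gbw j i)
      have "gvec \<psi> PX K R (M \<omega>) \<theta> a = pdiff (pdiff (Jhat \<psi> PX K (M \<omega>)) (dir_w i j)) (dir_b j) \<theta>"
        by (simp add: gvec_def Gbw)
      also have "\<dots> = T (phi \<psi> \<theta> a) \<omega>"
        unfolding Jhat_second[OF d\<psi>0 d\<psi>1 c0 c1 c2 cS AES dirlike_w dirlike_b]
        by (simp add: T_def phi_def Gbw)
      finally show ?thesis by (simp add: A_def Gbw)
    next
      case (Gww j i k)
      have "gvec \<psi> PX K R (M \<omega>) \<theta> a = pdiff (pdiff (Jhat \<psi> PX K (M \<omega>)) (dir_w k j)) (dir_w i j) \<theta>"
        by (simp add: gvec_def Gww)
      also have "\<dots> = T (phi \<psi> \<theta> a) \<omega>"
        unfolding Jhat_second[OF d\<psi>0 d\<psi>1 c0 c1 c2 cS AES dirlike_w dirlike_w]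
        by (simp add: T_def phi_def Gww)
      finally show ?thesis by (simp add: A_def Gww)
    qed
  qed
  have intphi: "integrable PX (\<lambda>x. \<phi> x * target K (M \<omega>) x)"
    if "continuous_on UNIV \<phi>" "\<omega> \<in> space P" for \<phi> \<omega>
  proof -
    interpret kern PX MM K "M \<omega>" by (rule kernm[OF Mspace[OF that(2)]])
    show ?thesis by (rule int_cont_mult[OF that(1) cS AES target_int PX_borel])
  qed
  have good: "goodrv P (T \<phi>)" if c\<phi>: "continuous_on UNIV \<phi>" for \<phi>
  proof (cases "\<exists>x\<in>msupport PX. \<phi> x \<noteq> 0")
    case True
    obtain \<mu> \<sigma> where "\<sigma> > 0"
      "distributed P lborel (\<lambda>\<omega>. \<integral>x. \<phi> x * target K (M \<omega>) x \<partial>PX) (normal_density \<mu> \<sigma>)"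
      using M_gauss[rule_format, OF c\<phi> True] by blast
    then show ?thesis using gauss_good[OF P_prob] unfolding T_def by blast
  next
    case False
    interpret prob_space P by (rule P_prob)
    have z: "T \<phi> \<omega> = 0" for \<omega>
    proof -
      have "AE x in PX. \<phi> x * target K (M \<omega>) x = 0"
        using AES
      proof eventually_elim
        case (elim x)
        then have "\<phi> x = 0" using False by (simp add: S_def)
        then show ?case by simp
      qed
      then show ?thesis unfolding T_def by (rule integral_eq_zero_AE)
    qed
    have g0: "goodrv P (\<lambda>_. 0)" by (simp add: goodrv_def)
    show ?thesis by (rule goodrv_cong[OF _ g0]) (simp add: z)
  qed
  show ?thesis
    unfolding full_rank_on_def
  proof (intro allI impI)
    fix c :: "(('i, 'j) param, 'i, 'j) gidx \<Rightarrow> real"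
    assume hyp: "\<forall>a\<in>gindex. (\<Sum>b\<in>gindex. cov_matrix P (\<lambda>\<omega>. gvec \<psi> PX K R (M \<omega>) \<theta>) a b * c b) = 0"
    define \<phi>t where "\<phi>t = (\<lambda>x. \<Sum>a\<in>gindex. c a * phi \<psi> \<theta> a x)"
    have c\<phi>t: "continuous_on UNIV \<phi>t"
      unfolding \<phi>t_def by (intro continuous_intros cont_phi[OF c0 c1 c2])
    have zero: "\<forall>x\<in>msupport PX. \<phi>t x = 0"
    proof (rule ccontr)
      assume "\<not> (\<forall>x\<in>msupport PX. \<phi>t x = 0)"
      then have "\<exists>x\<in>msupport PX. \<phi>t x \<noteq> 0" by blast
      then obtain \<mu> \<sigma> where s: "\<sigma> > 0" and D: "distributed P lborel (T \<phi>t) (normal_density \<mu> \<sigma>)"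
        using M_gauss c\<phi>t unfolding T_def by blast
      show False
      proof (rule cov_degenerate[where Z = "\<lambda>\<omega>. gvec \<psi> PX K R (M \<omega>) \<theta>" and X = "\<lambda>a. T (phi \<psi> \<theta> a)"
            and A = A and c = c and I = gindex, OF P_prob finite_gindex _ _ _ _ s D])
        show "\<And>a. a \<in> gindex \<Longrightarrow> goodrv P (T (phi \<psi> \<theta> a))"
          using good cont_phi[OF c0 c1 c2] by blast
        show "\<And>\<omega> a. \<omega> \<in> space P \<Longrightarrow> a \<in> gindex \<Longrightarrow> gvec \<psi> PX K R (M \<omega>) \<theta> a = A a + T (phi \<psi> \<theta> a) \<omega>"
          by (rule Zeq)
        show "\<And>a. a \<in> gindex \<Longrightarrow> (\<Sum>b\<in>gindex. cov_matrix P (\<lambda>\<omega>. gvec \<psi> PX K R (M \<omega>) \<theta>) a b * c b) = 0"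
          using hyp by blast
        fix \<omega> assume \<omega>: "\<omega> \<in> space P"
        have "T \<phi>t \<omega> = (\<integral>x. (\<Sum>a\<in>gindex. c a * (phi \<psi> \<theta> a x * target K (M \<omega>) x)) \<partial>PX)"
          by (simp add: T_def \<phi>t_def sum_distrib_right mult.assoc)
        also have "\<dots> = (\<Sum>a\<in>gindex. (\<integral>x. c a * (phi \<psi> \<theta> a x * target K (M \<omega>) x) \<partial>PX))"
        proof (rule Bochner_Integration.integral_sum)
          fix a
          have "integrable PX (\<lambda>x. phi \<psi> \<theta> a x * target K (M \<omega>) x)"
            by (rule intphi[OF cont_phi[OF c0 c1 c2] \<omega>])
          then show "integrable PX (\<lambda>x. c a * (phi \<psi> \<theta> a x * target K (M \<omega>) x))" by simp
        qed
        also have "\<dots> = (\<Sum>a\<in>gindex. c a * (\<integral>x. phi \<psi> \<theta> a x * target K (M \<omega>) x \<partial>PX))"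
          by simp
        finally show "T \<phi>t \<omega> = (\<Sum>a\<in>gindex. c a * T (phi \<psi> \<theta> a) \<omega>)" by (simp add: T_def)
      qed
    qed
    have lin: "\<And>x. linear (Gresp \<psi> \<theta> x)"
      using resp_hasderiv[OF d\<psi>0] has_derivative_linear by blast
    show "\<forall>b\<in>gindex. c b = 0"
      by (rule eff_zero[OF eff lin]) (use zero in \<open>simp add: \<phi>t_def\<close>)
  qed
qed


end
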